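(* Fix the data described in the context (integers $n,m,n_1,\dots,n_m,\alpha$, functions $\varphi_0,\dots,\varphi_m$ with $\varphi_m\equiv1$, the Hamiltonians $h^{(k)}_i$ on $\mathcal M$ and the vector fields $X^{(k)}_i=\pi_0\,dh^{(k)}_i$). Let $s\in\{1,\dots,\alpha\}$ and let $\mathfrak M:\mathcal M\to\mathcal M$ be the Miura map $$\bar\lambda_i=\lambda_i,\quad \bar\mu_i=\lambda_i^{-s}\mu_i\ (i=1,\dots,n),\quad \bar c^{(k)}_i=h^{(k)}_{n_k-i+1}(\boldsymbol\lambda,\boldsymbol\mu,\mathbf c)\ (i=1,\dots,s),\quad \bar c^{(k)}_i=c^{(k)}_i\ (i=s+1,\dots,\alpha),$$ for $k=1,\dots,m$, assumed to define new coordinates $(\bar{\boldsymbol\lambda},\bar{\boldsymbol\mu},\bar{\mathbf c})$ on $\mathcal M$. Let $\bar h^{(k)}_i(\bar{\boldsymbol\lambda},\bar{\boldsymbol\mu},\bar{\mathbf c})$, $i=1,\dots,n_k$, $k=1,\dots,m$, be the functions obtained by solving, for the unknowns $\bar h^{(k)}_i$, the $n$ separation relations ($j=1,\dots,n$) $$\varphi_0(\bar\lambda_j,\bar\lambda_j^s\bar\mu_j)\bar\lambda_j^{-s}+\sum_{k=1}^m\varphi_k(\bar\lambda_j,\bar\mu_j\bar\lambda_j^s)\,\bar\psi_k(\bar\lambda_j)=0,$$ $$\bar\psi_k(\bar\lambda)=\bar c^{(k)}_\alpha\bar\lambda^{n_k+\alpha-s-1}+\dots+\bar c^{(k)}_{s+1}\bar\lambda^{n_k}+\sum_{i=1}^{n_k}\bar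 h^{(k)}_i\bar\lambda^{n_k-i}+\bar c^{(k)}_s\bar\lambda^{-1}+\dots+\bar c^{(k)}_1\bar\lambda^{-s},$$ and let $\bar X^{(k)}_i=\bar\pi\,d\bar h^{(k)}_i$ with $\bar\pi=\sum_{i=1}^n\frac{\partial}{\partial\bar\lambda_i}\wedge\frac{\partial}{\partial\bar\mu_i}$ (in the coordinates $(\bar{\boldsymbol\lambda},\bar{\boldsymbol\mu},\bar{\mathbf c})$). Then, as vector fields on $\mathcal M$, $$X^{(k)}_i=\bar X^{(k)}_i,\qquad i=1,\dots,n_k,\ k=1,\dots,m.$$
   Context: Let $n,m\ge1$, $n_1,\dots,n_m\ge1$ integers with $n_1+\dots+n_m=n$, and $\alpha$ an integer with $1\le\alpha\le\min_k n_k$; set $N=\alpha m$. Let $\varphi_0,\varphi_1,\dots,\varphi_m$ be smooth functions of $(\lambda,\mu)$ with $\varphi_m\equiv1$. Consider the $(n+N)$-parameter algebraic curve $$\varphi_0(\lambda,\mu)+\sum_{k=1}^m\varphi_k(\lambda,\mu)\,\psi_k(\lambda)=0,\qquad \psi_k(\lambda)=c^{(k)}_\alpha\lambda^{n_k-1+\alpha}+\dots+c^{(k)}_1\lambda^{n_k}+\sum_{i=1}^{n_k}a^{(k)}_i\lambda^{n_k-i}.$$ Taking $n$ copies with $(\lambda,\mu)$ replaced by $(\lambda_j,\mu_j)$, $j=1,\dots,n$, and solving (assumed possible on an open domain, with nondegenerate Jacobian with respect to the unknowns) for the $a^{(k)}_i$ gives functions $a^{(k)}_i=h^{(k)}_i(\boldsymbol\lambda,\boldsymbol\mu,\mathbf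 c)$, $i=1,\dots,n_k$, $k=1,\dots,m$. Here $\mathcal M\subset\mathbb{R}^{2n+N}$ is an open set with coordinates $(\boldsymbol\lambda,\boldsymbol\mu,\mathbf c)$, $\mathbf c=(c^{(1)}_1,\dots,c^{(1)}_\alpha,\dots,c^{(m)}_1,\dots,c^{(m)}_\alpha)$. The Poisson tensor $\pi_0=\sum_{i=1}^n\partial_{\lambda_i}\wedge\partial_{\mu_i}$ on $\mathcal M$ has rank $2n$, with the $c^{(k)}_j$ as Casimir functions, and $X^{(k)}_i:=\pi_0\,dh^{(k)}_i$. *)

theory Defs
  imports "HOL-Analysis.Analysis"
begin

text \<open>Smooth (C-infinity) functions of two real variables: continuous, with all
  first partial derivatives existing everywhere and again smooth (greatest fixed point).\<close>
coinductive smooth2 :: "(real \<times> real \<Rightarrow> real) \<Rightarrow> bool" where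
  "continuous_on UNIV f
   \<Longrightarrow> (\<forall>x y. ((\<lambda>t. f (t, y)) has_real_derivative d1 (x, y)) (at x))
   \<Longrightarrow> (\<forall>x y. ((\<lambda>t. f (x, t)) has_real_derivative d2 (x, y)) (at y))
   \<Longrightarrow> smooth2 d1 \<Longrightarrow> smooth2 d2 \<Longrightarrow> smooth2 f"

text \<open>Points of the phase space: (lambda_1..lambda_n, mu_1..mu_n, c^(k)_i), indices from 1.
  Coordinates outside the index ranges are irrelevant.\<close>
type_synonym pt = "(nat \<Rightarrow> real) \<times> (nat \<Rightarrow> real) \<times> (nat \<Rightarrow> nat \<Rightarrow> real)"

definition lam :: "pt \<Rightarrow> nat \<Rightarrow> real" where "lam p = fst p"
definition mu :: "pt \<Rightarrow> nat \<Rightarrow> real" where "mu p = fst (snd p)"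
definition cc :: "pt \<Rightarrow> nat \<Rightarrow> nat \<Rightarrow> real" where "cc p = snd (snd p)"

definition shift :: "pt \<Rightarrow> real \<Rightarrow> pt \<Rightarrow> pt" where
  "shift p t v = ((\<lambda>j. lam p j + t * lam v j), (\<lambda>j. mu p j + t * mu v j),
                  (\<lambda>k i. cc p k i + t * cc v k i))"

definition open_pts :: "nat \<Rightarrow> nat \<Rightarrow> (nat \<Rightarrow> nat) \<Rightarrow> nat \<Rightarrow> pt set \<Rightarrow> bool" where
  "open_pts n m nk \<alpha> M \<longleftrightarrow> (\<forall>p\<in>M. \<exists>e>0. \<forall>q.
     (\<forall>j\<in>{1..n}. \<bar>lam q j - lam p j\<bar> < e \<and> \<bar>mu q j - mu p j\<bar> < e) \<and>
     (\<forall>j. j \<notin> {1..n} \<longrightarrow> lam q j = lam p j \<and> mu q j = mu p j) \<and>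
     (\<forall>k\<in>{1..m}. \<forall>i\<in>{1..\<alpha>}. \<bar>cc q k i - cc p k i\<bar> < e) \<and>
     (\<forall>k i. \<not> (k \<in> {1..m} \<and> i \<in> {1..\<alpha>}) \<longrightarrow> cc q k i = cc p k i)
     \<longrightarrow> q \<in> M)"

definition psi :: "nat \<Rightarrow> nat \<Rightarrow> (nat \<Rightarrow> real) \<Rightarrow> (nat \<Rightarrow> real) \<Rightarrow> real \<Rightarrow> real" where
  "psi nk_k \<alpha> c a x = (\<Sum>r=1..\<alpha>. c r * x ^ (nk_k - 1 + r)) + (\<Sum>i=1..nk_k. a i * x ^ (nk_k - i))"

definition sep_rel :: "nat \<Rightarrow> nat \<Rightarrow> (nat \<Rightarrow> nat) \<Rightarrow> nat \<Rightarrow> (nat \<Rightarrow> real \<times> real \<Rightarrow> real)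
    \<Rightarrow> pt \<Rightarrow> (nat \<Rightarrow> nat \<Rightarrow> real) \<Rightarrow> bool" where
  "sep_rel n m nk \<alpha> \<phi> p a \<longleftrightarrow> (\<forall>j\<in>{1..n}.
     \<phi> 0 (lam p j, mu p j)
     + (\<Sum>k=1..m. \<phi> k (lam p j, mu p j) * psi (nk k) \<alpha> (cc p k) (a k) (lam p j)) = 0)"

definition supp_ok :: "nat \<Rightarrow> (nat \<Rightarrow> nat) \<Rightarrow> (nat \<Rightarrow> nat \<Rightarrow> real) \<Rightarrow> bool" where
  "supp_ok m nk a \<longleftrightarrow> (\<forall>k i. \<not> (k \<in> {1..m} \<and> i \<in> {1..nk k}) \<longrightarrow> a k i = 0)"

text \<open>Nondegeneracy of the Jacobian of the (linear in a) system with respect to the unknowns a.\<close>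
definition nondeg :: "nat \<Rightarrow> nat \<Rightarrow> (nat \<Rightarrow> nat) \<Rightarrow> (nat \<Rightarrow> real \<times> real \<Rightarrow> real) \<Rightarrow> pt \<Rightarrow> bool" where
  "nondeg n m nk \<phi> p \<longleftrightarrow> (\<forall>a. supp_ok m nk a \<longrightarrow>
     (\<forall>j\<in>{1..n}. (\<Sum>k=1..m. \<Sum>i=1..nk k. \<phi> k (lam p j, mu p j) * lam p j ^ (nk k - i) * a k i) = 0)
     \<longrightarrow> (\<forall>k i. a k i = 0))"

definition H :: "nat \<Rightarrow> nat \<Rightarrow> (nat \<Rightarrow> nat) \<Rightarrow> nat \<Rightarrow> (nat \<Rightarrow> real \<times> real \<Rightarrow> real)
    \<Rightarrow> pt \<Rightarrow> nat \<Rightarrow> nat \<Rightarrow> real" where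
  "H n m nk \<alpha> \<phi> p = (THE a. supp_ok m nk a \<and> sep_rel n m nk \<alpha> \<phi> p a)"

definition psibar :: "nat \<Rightarrow> nat \<Rightarrow> nat \<Rightarrow> (nat \<Rightarrow> real) \<Rightarrow> (nat \<Rightarrow> real) \<Rightarrow> real \<Rightarrow> real" where
  "psibar s nk_k \<alpha> c a x = (\<Sum>r=s+1..\<alpha>. c r * x ^ (nk_k + r - s - 1))
     + (\<Sum>i=1..nk_k. a i * x ^ (nk_k - i)) + (\<Sum>r=1..s. c r / x ^ (s + 1 - r))"

definition sep_rel_bar :: "nat \<Rightarrow> nat \<Rightarrow> nat \<Rightarrow> (nat \<Rightarrow> nat) \<Rightarrow> nat \<Rightarrow> (nat \<Rightarrow> real \<times> real \<Rightarrow> real)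
    \<Rightarrow> pt \<Rightarrow> (nat \<Rightarrow> nat \<Rightarrow> real) \<Rightarrow> bool" where
  "sep_rel_bar s n m nk \<alpha> \<phi> q a \<longleftrightarrow> (\<forall>j\<in>{1..n}.
     \<phi> 0 (lam q j, lam q j ^ s * mu q j) / lam q j ^ s
     + (\<Sum>k=1..m. \<phi> k (lam q j, mu q j * lam q j ^ s) * psibar s (nk k) \<alpha> (cc q k) (a k) (lam q j)) = 0)"

definition Hbar :: "nat \<Rightarrow> nat \<Rightarrow> nat \<Rightarrow> (nat \<Rightarrow> nat) \<Rightarrow> nat \<Rightarrow> (nat \<Rightarrow> real \<times> real \<Rightarrow> real)
    \<Rightarrow> pt \<Rightarrow> nat \<Rightarrow> nat \<Rightarrow> real" where
  "Hbar s n m nk \<alpha> \<phi> q = (THE a. supp_ok m nk a \<and> sep_rel_bar s n m nk \<alpha> \<phi> q a)"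

definition Miura :: "nat \<Rightarrow> nat \<Rightarrow> nat \<Rightarrow> (nat \<Rightarrow> nat) \<Rightarrow> nat \<Rightarrow> (nat \<Rightarrow> real \<times> real \<Rightarrow> real)
    \<Rightarrow> pt \<Rightarrow> pt" where
  "Miura s n m nk \<alpha> \<phi> p = (lam p, (\<lambda>j. mu p j / lam p j ^ s),
     (\<lambda>k i. if 1 \<le> i \<and> i \<le> s then H n m nk \<alpha> \<phi> p k (nk k - i + 1) else cc p k i))"

definition dlam :: "(pt \<Rightarrow> real) \<Rightarrow> pt \<Rightarrow> nat \<Rightarrow> real" where
  "dlam f p j = deriv (\<lambda>t. f ((lam p)(j := lam p j + t), mu p, cc p)) 0"
definition dmu :: "(pt \<Rightarrow> real) \<Rightarrow> pt \<Rightarrow> nat \<Rightarrow> real" where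
  "dmu f p j = deriv (\<lambda>t. f (lam p, (mu p)(j := mu p j + t), cc p)) 0"

text \<open>Hamiltonian vector field pi df for pi = sum_j d/dlambda_j wedge d/dmu_j, written as
  a tangent vector in the coordinates (lambda, mu, c); the c-components vanish.\<close>
definition ham_vf :: "(pt \<Rightarrow> real) \<Rightarrow> pt \<Rightarrow> pt" where
  "ham_vf f p = ((\<lambda>j. dmu f p j), (\<lambda>j. - dlam f p j), (\<lambda>k i. 0))"

end

theory Submission
  imports Defs "Jordan_Normal_Form.Determinant"
begin

definition PI :: "nat \<Rightarrow> (nat\<Rightarrow>nat) \<Rightarrow> (nat\<times>nat) set" where
  "PI m nk = Sigma {1..m} (\<lambda>k. {1..nk k})"
definition lsum :: "nat \<Rightarrow> (nat\<Rightarrow>nat) \<Rightarrow> (nat\<Rightarrow>nat\<Rightarrow>real) \<Rightarrow> (nat\<Rightarrow>nat\<Rightarrow>real) \<Rightarrow> real" where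
  "lsum m nk C a = (\<Sum>k=1..m. \<Sum>i=1..nk k. C k i * a k i)"
definition ninj :: "nat \<Rightarrow> nat \<Rightarrow> (nat\<Rightarrow>nat) \<Rightarrow> (nat\<Rightarrow>nat\<Rightarrow>nat\<Rightarrow>real) \<Rightarrow> bool" where
  "ninj n m nk C \<longleftrightarrow> (\<forall>a. supp_ok m nk a \<longrightarrow> (\<forall>j\<in>{1..n}. lsum m nk (C j) a = 0) \<longrightarrow> (\<forall>k i. a k i = 0))"
definition solves :: "nat \<Rightarrow> nat \<Rightarrow> (nat\<Rightarrow>nat) \<Rightarrow> (nat\<Rightarrow>nat\<Rightarrow>nat\<Rightarrow>real) \<Rightarrow> (nat \<Rightarrow> real) \<Rightarrow> (nat\<Rightarrow>nat\<Rightarrow>real) \<Rightarrow> bool" where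
  "solves n m nk C b a \<longleftrightarrow> supp_ok m nk a \<and> (\<forall>j\<in>{1..n}. lsum m nk (C j) a = b j)"

lemma finite_PI[simp]: "finite (PI m nk)" by (simp add: PI_def)
lemma mem_PI: "(k,i) \<in> PI m nk \<longleftrightarrow> k \<in> {1..m} \<and> i \<in> {1..nk k}" by (simp add: PI_def)

lemma lsum_PI: "lsum m nk C a = (\<Sum>(k,i)\<in>PI m nk. C k i * a k i)"
  unfolding lsum_def PI_def by (simp add: sum.Sigma)

lemma card_PI: "card (PI m nk) = (\<Sum>k=1..m. nk k)"
  unfolding PI_def by (simp add: card_SigmaI)

lemma supp_ok_PI: "supp_ok m nk a \<longleftrightarrow> (\<forall>k i. (k,i) \<notin> PI m nk \<longrightarrow> a k i = 0)"
  unfolding supp_ok_def mem_PI by blast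

lemma lsum_diff: "lsum m nk C (\<lambda>k i. a k i - b k i) = lsum m nk C a - lsum m nk C b"
  unfolding lsum_def by (simp add: right_diff_distrib sum_subtractf)

lemma solves_unique:
  assumes "ninj n m nk C" "solves n m nk C b a" "solves n m nk C b a'"
  shows "a = a'"
proof -
  have "supp_ok m nk (\<lambda>k i. a k i - a' k i)" using assms(2,3) unfolding solves_def supp_ok_def by auto
  moreover have "\<forall>j\<in>{1..n}. lsum m nk (C j) (\<lambda>k i. a k i - a' k i) = 0"
    using assms(2,3) unfolding solves_def by (simp add: lsum_diff)
  ultimately have "\<forall>k i. a k i - a' k i = 0" using assms(1) unfolding ninj_def by blast
  thus ?thesis by (auto intro!: ext)
qed

definition Amat :: "nat \<Rightarrow> (nat \<Rightarrow> nat \<times> nat) \<Rightarrow> (nat\<Rightarrow>nat\<Rightarrow>nat\<Rightarrow>real) \<Rightarrow> real mat" where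
  "Amat n e C = mat n n (\<lambda>(r,c). C (Suc r) (fst (e c)) (snd (e c)))"
definition avec :: "nat \<Rightarrow> (nat \<Rightarrow> nat \<times> nat) \<Rightarrow> (nat\<Rightarrow>nat\<Rightarrow>real) \<Rightarrow> real vec" where
  "avec n e a = vec n (\<lambda>c. a (fst (e c)) (snd (e c)))"
definition bvec :: "nat \<Rightarrow> (nat \<Rightarrow> real) \<Rightarrow> real vec" where
  "bvec n b = vec n (\<lambda>r. b (Suc r))"
definition unvec :: "nat \<Rightarrow> (nat \<Rightarrow> nat \<times> nat) \<Rightarrow> (nat\<times>nat) set \<Rightarrow> real vec \<Rightarrow> nat \<Rightarrow> nat \<Rightarrow> real" where
  "unvec n e S v k i = (if (k,i) \<in> S then v $ (inv_into {0..<n} e (k,i)) else 0)"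

lemma Amat_carrier[simp]: "Amat n e C \<in> carrier_mat n n" by (simp add: Amat_def)
lemma Amat_dims[simp]: "dim_row (Amat n e C) = n" "dim_col (Amat n e C) = n" by (simp_all add: Amat_def)

lemma Amat_mult:
  assumes e: "bij_betw e {0..<n} (PI m nk)" and r: "r < n"
  shows "(Amat n e C *\<^sub>v avec n e a) $ r = lsum m nk (C (Suc r)) a"
proof -
  have "(Amat n e C *\<^sub>v avec n e a) $ r = (\<Sum>c\<in>{0..<n}. C (Suc r) (fst (e c)) (snd (e c)) * a (fst (e c)) (snd (e c)))"
    using r by (simp add: Amat_def avec_def scalar_prod_def)
  also have "\<dots> = (\<Sum>(k,i)\<in>PI m nk. C (Suc r) k i * a k i)"
    using sum.reindex_bij_betw[OF e, of "\<lambda>(k,i). C (Suc r) k i * a k i"] by (simp add: case_prod_beta)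
  finally show ?thesis by (simp add: lsum_PI)
qed

lemma avec_unvec:
  assumes e: "bij_betw e {0..<n} (PI m nk)" and v: "v \<in> carrier_vec n"
  shows "avec n e (unvec n e (PI m nk) v) = v"
proof -
  have "\<And>c. c < n \<Longrightarrow> e c \<in> PI m nk \<and> inv_into {0..<n} e (e c) = c"
    using e by (auto simp: bij_betw_def inv_into_f_f)
  thus ?thesis using v by (auto simp: avec_def unvec_def)
qed

lemma supp_unvec: "supp_ok m nk (unvec n e (PI m nk) v)"
  by (auto simp: supp_ok_PI unvec_def)

lemma unvec_avec:
  assumes e: "bij_betw e {0..<n} (PI m nk)" and a: "supp_ok m nk a"
  shows "unvec n e (PI m nk) (avec n e a) = a"
proof (intro ext)
  fix k i
  show "unvec n e (PI m nk) (avec n e a) k i = a k i"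
  proof (cases "(k,i) \<in> PI m nk")
    case True
    then have "inv_into {0..<n} e (k,i) < n" "e (inv_into {0..<n} e (k,i)) = (k,i)"
      using e inv_into_into[of "(k,i)" e "{0..<n}"] by (auto simp: bij_betw_def f_inv_into_f)
    then show ?thesis using True by (simp add: unvec_def avec_def)
  next
    case False then show ?thesis using a by (simp add: unvec_def supp_ok_PI)
  qed
qed

lemma det_Amat_ne:
  assumes e: "bij_betw e {0..<n} (PI m nk)" and inj: "ninj n m nk C"
  shows "det (Amat n e C) \<noteq> 0"
proof
  assume "det (Amat n e C) = 0"
  then obtain v where v: "v \<in> carrier_vec n" "v \<noteq> 0\<^sub>v n" "Amat n e C *\<^sub>v v = 0\<^sub>v n"
    using det_0_iff_vec_prod_zero[OF Amat_carrier] by blast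
  define a where "a = unvec n e (PI m nk) v"
  have av: "avec n e a = v" unfolding a_def by (rule avec_unvec[OF e v(1)])
  have "\<forall>j\<in>{1..n}. lsum m nk (C j) a = 0"
  proof
    fix j assume j: "j \<in> {1..n}"
    then obtain r where r: "j = Suc r" "r < n" by (cases j) auto
    have "(Amat n e C *\<^sub>v avec n e a) $ r = 0" using av v(3) r by simp
    thus "lsum m nk (C j) a = 0" using Amat_mult[OF e r(2)] r by simp
  qed
  then have "\<forall>k i. a k i = 0" using inj supp_unvec unfolding ninj_def a_def by blast
  then have "avec n e a = 0\<^sub>v n" by (auto simp: avec_def)
  thus False using av v(2) by simp
qed

lemma PI_bij: "\<exists>e. bij_betw e {0..<(\<Sum>k=1..m. nk k)} (PI m nk)"
  using ex_bij_betw_nat_finite[of "PI m nk"] by (simp add: card_PI)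

lemma solves_vec:
  assumes e: "bij_betw e {0..<n} (PI m nk)" and a: "supp_ok m nk a"
  shows "solves n m nk C b a \<longleftrightarrow> Amat n e C *\<^sub>v avec n e a = bvec n b"
proof
  assume s: "solves n m nk C b a"
  show "Amat n e C *\<^sub>v avec n e a = bvec n b"
  proof (rule eq_vecI)
    fix r assume "r < dim_vec (bvec n b)" then have r: "r < n" by (simp add: bvec_def)
    show "(Amat n e C *\<^sub>v avec n e a) $ r = bvec n b $ r"
      using Amat_mult[OF e r] s r unfolding solves_def bvec_def by auto
  qed (simp add: bvec_def Amat_def)
next
  assume h: "Amat n e C *\<^sub>v avec n e a = bvec n b"
  show "solves n m nk C b a" unfolding solves_def
  proof (intro conjI a ballI)
    fix j assume j: "j \<in> {1..n}"
    then obtain r where r: "j = Suc r" "r < n" by (cases j) auto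
    show "lsum m nk (C j) a = b j" using Amat_mult[OF e r(2), of C a] h r by (simp add: bvec_def)
  qed
qed

lemma solves_exists:
  assumes n: "(\<Sum>k=1..m. nk k) = n" and inj: "ninj n m nk C"
  shows "\<exists>a. solves n m nk C b a"
proof -
  obtain e where e: "bij_betw e {0..<n} (PI m nk)" using PI_bij n by metis
  have d: "det (Amat n e C) \<noteq> 0" by (rule det_Amat_ne[OF e inj])
  from det_non_zero_imp_unit[OF Amat_carrier d, unfolded Units_def ring_mat_def]
  obtain Q where Q: "Q \<in> carrier_mat n n" "Amat n e C * Q = 1\<^sub>m n" by auto
  define v where "v = Q *\<^sub>v bvec n b"
  have vc: "v \<in> carrier_vec n" using Q by (simp add: v_def bvec_def)
  have "Amat n e C *\<^sub>v v = bvec n b"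
    unfolding v_def using Q by (simp add: assoc_mult_mat_vec[symmetric, of _ n n _ n] bvec_def)
  then have "solves n m nk C b (unvec n e (PI m nk) v)"
    using solves_vec[OF e supp_unvec] avec_unvec[OF e vc] by simp
  thus ?thesis by blast
qed

lemma DERIV_ex_sum:
  assumes "finite S" "\<forall>s\<in>S. \<exists>D. ((f s) has_real_derivative D) (at x)"
  shows "\<exists>D. ((\<lambda>t. \<Sum>s\<in>S. f s t) has_real_derivative D) (at x)"
  using assms
proof (induction S rule: finite_induct)
  case empty then show ?case by (auto intro: DERIV_const)
next
  case (insert a S)
  then obtain D1 D2 where "((f a) has_real_derivative D1) (at x)" "((\<lambda>t. \<Sum>s\<in>S. f s t) has_real_derivative D2) (at x)" by auto
  from DERIV_add[OF this] show ?case using insert by auto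
qed

lemma DERIV_ex_prod:
  assumes "finite S" "\<forall>s\<in>S. \<exists>D. ((f s) has_real_derivative D) (at x)"
  shows "\<exists>D. ((\<lambda>t. \<Prod>s\<in>S. f s t) has_real_derivative D) (at x)"
  using assms
proof (induction S rule: finite_induct)
  case empty then show ?case by (auto intro: DERIV_const)
next
  case (insert a S)
  then obtain D1 D2 where "((f a) has_real_derivative D1) (at x)" "((\<lambda>t. \<Prod>s\<in>S. f s t) has_real_derivative D2) (at x)" by auto
  from DERIV_mult[OF this] show ?case using insert by auto
qed

lemma det_DERIV_ex:
  assumes M: "\<And>t. M t \<in> carrier_mat n n"
    and d: "\<forall>r<n. \<forall>c<n. \<exists>D. ((\<lambda>t. M t $$ (r,c)) has_real_derivative D) (at x)"
  shows "\<exists>D. ((\<lambda>t. det (M t)) has_real_derivative D) (at x)"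
proof -
  have eq: "(\<lambda>t. det (M t)) = (\<lambda>t. \<Sum>p \<in> {p. p permutes {0 ..< n}}. signof p * (\<Prod>i = 0 ..< n. M t $$ (i, p i)))"
    using det_def'[OF M] by (intro ext) simp
  have fin: "finite {p. p permutes {0 ..< n}}" by (simp add: finite_permutations)
  have "\<forall>p\<in>{p. p permutes {0 ..< n}}. \<exists>D. ((\<lambda>t. signof p * (\<Prod>i = 0 ..< n. M t $$ (i, p i))) has_real_derivative D) (at x)"
  proof
    fix p assume p: "p \<in> {p. p permutes {0 ..< n}}"
    have "\<forall>i\<in>{0..<n}. \<exists>D. ((\<lambda>t. M t $$ (i, p i)) has_real_derivative D) (at x)"
      using d p permutes_in_image[of p "{0..<n}"] by auto
    then obtain D where "((\<lambda>t. \<Prod>i = 0 ..< n. M t $$ (i, p i)) has_real_derivative D) (at x)"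
      using DERIV_ex_prod[of "{0..<n}" "\<lambda>i t. M t $$ (i, p i)" x] by auto
    from DERIV_cmult[OF this] show "\<exists>D. ((\<lambda>t. signof p * (\<Prod>i = 0 ..< n. M t $$ (i, p i))) has_real_derivative D) (at x)" by blast
  qed
  from DERIV_ex_sum[OF fin this] show ?thesis unfolding eq .
qed

lemma solves_diff:
  assumes n: "(\<Sum>k=1..m. nk k) = n"
    and dC: "\<forall>j\<in>{1..n}. \<forall>k i. (k,i) \<in> PI m nk \<longrightarrow> ((\<lambda>t. C t j k i) has_real_derivative C' j k i) (at 0)"
    and db: "\<forall>j\<in>{1..n}. ((\<lambda>t. b t j) has_real_derivative b' j) (at 0)"
    and ev: "eventually (\<lambda>t. ninj n m nk (C t) \<and> solves n m nk (C t) (b t) (x t)) (nhds 0)"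
  shows "\<exists>x'. supp_ok m nk x' \<and> (\<forall>j\<in>{1..n}. lsum m nk (C 0 j) x' + lsum m nk (C' j) (x 0) = b' j)
     \<and> (\<forall>k i. ((\<lambda>t. x t k i) has_real_derivative x' k i) (at 0))"
proof -
  obtain e where e: "bij_betw e {0..<n} (PI m nk)" using PI_bij n by metis
  have eP: "\<And>c. c < n \<Longrightarrow> e c \<in> PI m nk" using e by (auto simp: bij_betw_def)
  define A where "A t = Amat n e (C t)" for t
  define bv where "bv t = bvec n (b t)" for t
  have ev0: "ninj n m nk (C 0) \<and> solves n m nk (C 0) (b 0) (x 0)" using eventually_nhds_x_imp_x[OF ev] .
  have cram: "eventually (\<lambda>t. x t (fst (e c)) (snd (e c)) = det (replace_col (A t) (bv t) c) / det (A t)) (nhds 0)"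
    if c: "c < n" for c
    using ev
  proof (rule eventually_mono)
    fix t assume h: "ninj n m nk (C t) \<and> solves n m nk (C t) (b t) (x t)"
    have dn: "det (A t) \<noteq> 0" unfolding A_def by (rule det_Amat_ne[OF e]) (use h in auto)
    have "A t *\<^sub>v avec n e (x t) = bv t" using h solves_vec[OF e] unfolding A_def bv_def solves_def by blast
    then have "det (replace_col (A t) (bv t) c) = avec n e (x t) $ c * det (A t)"
      using cramer_lemma_mat[of "A t" n "avec n e (x t)" c] c by (simp add: A_def avec_def)
    thus "x t (fst (e c)) (snd (e c)) = det (replace_col (A t) (bv t) c) / det (A t)"
      using dn c by (simp add: avec_def)
  qed
  have dA: "\<forall>r<n. \<forall>c<n. \<exists>D. ((\<lambda>t. A t $$ (r,c)) has_real_derivative D) (at 0)"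
  proof (intro allI impI)
    fix r c assume r: "r < n" and c: "c < n"
    have "((\<lambda>t. C t (Suc r) (fst (e c)) (snd (e c))) has_real_derivative C' (Suc r) (fst (e c)) (snd (e c))) (at 0)"
      using dC eP[OF c] r by (cases "e c") auto
    moreover have "(\<lambda>t. A t $$ (r,c)) = (\<lambda>t. C t (Suc r) (fst (e c)) (snd (e c)))"
      using r c by (simp add: A_def Amat_def)
    ultimately show "\<exists>D. ((\<lambda>t. A t $$ (r,c)) has_real_derivative D) (at 0)" by auto
  qed
  have xd: "\<exists>D. ((\<lambda>t. x t (fst (e c)) (snd (e c))) has_real_derivative D) (at 0)" if c: "c < n" for c
  proof -
    obtain D1 where D1: "((\<lambda>t. det (A t)) has_real_derivative D1) (at 0)"
      using det_DERIV_ex[of A n 0] dA by (auto simp: A_def)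
    have "\<forall>r<n. \<forall>c'<n. \<exists>D. ((\<lambda>t. replace_col (A t) (bv t) c $$ (r,c')) has_real_derivative D) (at 0)"
    proof (intro allI impI)
      fix r c' assume r: "r < n" and c': "c' < n"
      show "\<exists>D. ((\<lambda>t. replace_col (A t) (bv t) c $$ (r,c')) has_real_derivative D) (at 0)"
      proof (cases "c' = c")
        case True
        have "(\<lambda>t. replace_col (A t) (bv t) c $$ (r,c')) = (\<lambda>t. b t (Suc r))"
          using r c' True by (simp add: replace_col_def A_def bv_def bvec_def Amat_def)
        then show ?thesis using db r by auto
      next
        case False
        have "(\<lambda>t. replace_col (A t) (bv t) c $$ (r,c')) = (\<lambda>t. A t $$ (r,c'))"
          using r c' False by (simp add: replace_col_def A_def)
        then show ?thesis using dA r c' by auto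
      qed
    qed
    then obtain D2 where D2: "((\<lambda>t. det (replace_col (A t) (bv t) c)) has_real_derivative D2) (at 0)"
      using det_DERIV_ex[of "\<lambda>t. replace_col (A t) (bv t) c" n 0] by (auto simp: replace_col_def A_def)
    have dn: "det (A 0) \<noteq> 0" unfolding A_def by (rule det_Amat_ne[OF e]) (use ev0 in auto)
    from DERIV_divide[OF D2 D1 dn] obtain D where
      "((\<lambda>t. det (replace_col (A t) (bv t) c) / det (A t)) has_real_derivative D) (at 0)" by blast
    then show ?thesis using DERIV_cong_ev[OF refl cram[OF c] refl] by blast
  qed
  then obtain xdd where xdd: "\<And>c. c < n \<Longrightarrow> ((\<lambda>t. x t (fst (e c)) (snd (e c))) has_real_derivative xdd c) (at 0)"
    by metis
  define x' where "x' k i = (if (k,i) \<in> PI m nk then xdd (inv_into {0..<n} e (k,i)) else 0)" for k i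
  have sx': "supp_ok m nk x'" by (auto simp: supp_ok_PI x'_def)
  have dx: "((\<lambda>t. x t k i) has_real_derivative x' k i) (at 0)" for k i
  proof (cases "(k,i) \<in> PI m nk")
    case True
    then have "inv_into {0..<n} e (k,i) < n" "e (inv_into {0..<n} e (k,i)) = (k,i)"
      using e inv_into_into[of "(k,i)" e "{0..<n}"] by (auto simp: bij_betw_def f_inv_into_f)
    then show ?thesis using xdd[of "inv_into {0..<n} e (k,i)"] True by (simp add: x'_def)
  next
    case False
    have "eventually (\<lambda>t. x t k i = 0) (nhds 0)"
      using ev by (rule eventually_mono) (use False in \<open>auto simp: solves_def supp_ok_PI\<close>)
    then show ?thesis using DERIV_cong_ev[of 0 0 "\<lambda>t. x t k i" "\<lambda>_. 0"] False
      by (simp add: x'_def)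
  qed
  have eqn: "lsum m nk (C 0 j) x' + lsum m nk (C' j) (x 0) = b' j" if j: "j \<in> {1..n}" for j
  proof -
    have D: "((\<lambda>t. \<Sum>(k,i)\<in>PI m nk. C t j k i * x t k i) has_real_derivative
        (\<Sum>(k,i)\<in>PI m nk. C' j k i * x 0 k i + x' k i * C 0 j k i)) (at 0)"
      unfolding case_prod_beta
      by (rule DERIV_sum, rule DERIV_mult) (use dC j dx in \<open>auto simp: case_prod_beta\<close>)
    have evj: "eventually (\<lambda>t. (\<Sum>(k,i)\<in>PI m nk. C t j k i * x t k i) = b t j) (nhds 0)"
      using ev by (rule eventually_mono) (use j in \<open>auto simp: solves_def lsum_PI\<close>)
    then have "((\<lambda>t. \<Sum>(k,i)\<in>PI m nk. C t j k i * x t k i) has_real_derivative b' j) (at 0)"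
      using DERIV_cong_ev[OF refl evj refl] db j by blast
    from DERIV_unique[OF D this] show ?thesis
      by (simp add: lsum_PI sum.distrib case_prod_beta mult.commute)
  qed
  show ?thesis using sx' eqn dx by blast
qed



lemma smooth2_frechet:
  assumes "smooth2 f"
  shows "\<exists>d1 d2. \<forall>z. (f has_derivative (\<lambda>h. d1 z * fst h + d2 z * snd h)) (at z)"
  using assms
proof cases
  case (1 d1 d2)
  have c2: "continuous_on UNIV d2" using 1(5) by cases
  have "(f has_derivative (\<lambda>h. d1 z * fst h + d2 z * snd h)) (at z)" for z
  proof -
    obtain x y where z: "z = (x,y)" by (cases z)
    have fx: "((\<lambda>x. f (x, y)) has_derivative (\<lambda>h. h * d1 (x,y))) (at x within UNIV)"
      using 1(2) unfolding has_field_derivative_def by (simp add: mult.commute[of _ "d1 (x,y)"])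
    have fy: "((\<lambda>y. f (x', y)) has_derivative blinfun_apply (blinfun_mult_right (d2 (x',y')))) (at y' within UNIV)" for x' y'
      using 1(3) by (simp add: has_field_derivative_def)
    have cont: "continuous (at (x, y) within UNIV \<times> UNIV) (\<lambda>(x, y). blinfun_mult_right (d2 (x,y)))"
    proof -
      have "continuous (at (x,y)) d2" using c2 by (simp add: continuous_on_eq_continuous_at)
      then have "continuous (at (x,y)) (\<lambda>z. blinfun_mult_right (d2 z))"
        by (intro continuous_intros bounded_linear.continuous[OF bounded_linear_blinfun_mult_right])
      thus ?thesis by (simp add: case_prod_beta')
    qed
    from has_derivative_partialsI[where f="\<lambda>x y. f (x,y)", OF fx fy cont]
    have "((\<lambda>(x, y). f (x, y)) has_derivative (\<lambda>(tx, ty). tx * d1 (x,y) + d2 (x,y) * ty)) (at (x, y))"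
      by simp
    then show ?thesis unfolding z by (simp add: case_prod_beta' mult.commute)
  qed
  then show ?thesis by blast
qed

lemma chain2:
  assumes f: "(f has_derivative (\<lambda>h. D1 * fst h + D2 * snd h)) (at (x t, y t))"
    and x: "(x has_real_derivative x') (at t)" and y: "(y has_real_derivative y') (at t)"
  shows "((\<lambda>t. f (x t, y t)) has_real_derivative D1 * x' + D2 * y') (at t)"
proof -
  have p: "((\<lambda>t. (x t, y t)) has_derivative (\<lambda>h. (h * x', h * y'))) (at t)"
    using has_derivative_Pair[OF x[unfolded has_field_derivative_def] y[unfolded has_field_derivative_def]]
    by (simp add: mult.commute)
  from has_derivative_compose[OF p f]
  have "((\<lambda>t. f (x t, y t)) has_derivative (\<lambda>h. D1 * (h * x') + D2 * (h * y'))) (at t)" by simp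
  moreover have "(\<lambda>h. D1 * (h * x') + D2 * (h * y')) = (*) (D1 * x' + D2 * y')"
    by (auto simp: algebra_simps)
  ultimately show ?thesis by (simp add: has_field_derivative_def)
qed


locale S12 =
  fixes n m \<alpha> s :: nat and nk :: "nat \<Rightarrow> nat"
    and \<phi> :: "nat \<Rightarrow> real \<times> real \<Rightarrow> real" and \<M> :: "pt set"
  assumes n1: "n \<ge> 1" and m1: "m \<ge> 1"
    and nk1: "\<forall>k\<in>{1..m}. nk k \<ge> 1"
    and nsum: "(\<Sum>k=1..m. nk k) = n"
    and a1: "1 \<le> \<alpha>" and ank: "\<forall>k\<in>{1..m}. \<alpha> \<le> nk k"
    and smooth: "\<forall>k\<in>{0..m}. smooth2 (\<phi> k)"
    and phim: "\<phi> m = (\<lambda>_. 1)"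
    and opn: "open_pts n m nk \<alpha> \<M>"
    and nondg: "\<forall>p\<in>\<M>. nondeg n m nk \<phi> p"
    and ex: "\<forall>p\<in>\<M>. \<exists>a. supp_ok m nk a \<and> sep_rel n m nk \<alpha> \<phi> p a"
    and sr: "s \<in> {1..\<alpha>}"
    and lnz: "\<forall>p\<in>\<M>. \<forall>j\<in>{1..n}. lam p j \<noteq> 0"
begin

definition "D1 = (SOME D1. \<exists>D2. \<forall>k\<in>{0..m}. \<forall>z. (\<phi> k has_derivative (\<lambda>h. D1 k z * fst h + D2 k z * snd h)) (at z))"
definition "D2 = (SOME D2. \<forall>k\<in>{0..m}. \<forall>z. (\<phi> k has_derivative (\<lambda>h. D1 k z * fst h + D2 k z * snd h)) (at z))"

lemma phiD: "k \<in> {0..m} \<Longrightarrow> (\<phi> k has_derivative (\<lambda>h. D1 k z * fst h + D2 k z * snd h)) (at z)"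
proof -
  have "\<forall>k\<in>{0..m}. \<exists>d1 d2. \<forall>z. (\<phi> k has_derivative (\<lambda>h. d1 z * fst h + d2 z * snd h)) (at z)"
    using smooth smooth2_frechet by blast
  then have "\<forall>k\<in>{0..m}. \<exists>d. \<forall>z. (\<phi> k has_derivative (\<lambda>h. fst d z * fst h + snd d z * snd h)) (at z)"
  proof (intro ballI)
    fix k assume k: "k \<in> {0..m}"
    assume h: "\<forall>k\<in>{0..m}. \<exists>d1 d2. \<forall>z. (\<phi> k has_derivative (\<lambda>h. d1 z * fst h + d2 z * snd h)) (at z)"
    then obtain d1 d2 where "\<forall>z. (\<phi> k has_derivative (\<lambda>h. d1 z * fst h + d2 z * snd h)) (at z)" using k by blast
    then show "\<exists>d. \<forall>z. (\<phi> k has_derivative (\<lambda>h. fst d z * fst h + snd d z * snd h)) (at z)"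
      by (intro exI[of _ "(d1,d2)"]) simp
  qed
  from bchoice[OF this] obtain f where f: "\<forall>k\<in>{0..m}. \<forall>z. (\<phi> k has_derivative (\<lambda>h. fst (f k) z * fst h + snd (f k) z * snd h)) (at z)" ..
  have "\<exists>D1 D2. \<forall>k\<in>{0..m}. \<forall>z. (\<phi> k has_derivative (\<lambda>h. D1 k z * fst h + D2 k z * snd h)) (at z)"
    by (rule exI[of _ "\<lambda>k. fst (f k)"], rule exI[of _ "\<lambda>k. snd (f k)"]) (rule f)
  then have "\<exists>D2. \<forall>k\<in>{0..m}. \<forall>z. (\<phi> k has_derivative (\<lambda>h. D1 k z * fst h + D2 k z * snd h)) (at z)"
    unfolding D1_def by (rule someI_ex)
  then have "\<forall>k\<in>{0..m}. \<forall>z. (\<phi> k has_derivative (\<lambda>h. D1 k z * fst h + D2 k z * snd h)) (at z)"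
    unfolding D2_def by (rule someI_ex)
  thus "k \<in> {0..m} \<Longrightarrow> ?thesis" by blast
qed

definition "Cof q l k i = \<phi> k (lam q l, mu q l) * lam q l ^ (nk k - i)"
definition "bold q l = - (\<phi> 0 (lam q l, mu q l) + (\<Sum>k=1..m. \<phi> k (lam q l, mu q l) * (\<Sum>r=1..\<alpha>. cc q k r * lam q l ^ (nk k - 1 + r))))"
definition "Erow q l a = \<phi> 0 (lam q l, mu q l) + (\<Sum>k=1..m. \<phi> k (lam q l, mu q l) * psi (nk k) \<alpha> (cc q k) (a k) (lam q l))"
definition "Cofb q l k i = \<phi> k (lam q l, mu q l * lam q l ^ s) * lam q l ^ (nk k - i)"
definition "bbar q l = - (\<phi> 0 (lam q l, lam q l ^ s * mu q l) / lam q l ^ s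
   + (\<Sum>k=1..m. \<phi> k (lam q l, mu q l * lam q l ^ s) * ((\<Sum>r=s+1..\<alpha>. cc q k r * lam q l ^ (nk k + r - s - 1)) + (\<Sum>r=1..s. cc q k r / lam q l ^ (s + 1 - r)))))"
definition "Ebrow q l a = \<phi> 0 (lam q l, lam q l ^ s * mu q l) / lam q l ^ s
     + (\<Sum>k=1..m. \<phi> k (lam q l, mu q l * lam q l ^ s) * psibar s (nk k) \<alpha> (cc q k) (a k) (lam q l))"

lemma Erow_lin: "Erow q l a = lsum m nk (Cof q l) a - bold q l"
  unfolding Erow_def lsum_def Cof_def bold_def psi_def
  by (simp add: distrib_left sum.distrib sum_distrib_left mult_ac)

lemma Ebrow_lin: "Ebrow q l a = lsum m nk (Cofb q l) a - bbar q l"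
  unfolding Ebrow_def lsum_def Cofb_def bbar_def psibar_def
  by (simp add: distrib_left sum.distrib sum_distrib_left mult_ac)

lemma sep_rel_solves: "supp_ok m nk a \<and> sep_rel n m nk \<alpha> \<phi> q a \<longleftrightarrow> solves n m nk (Cof q) (bold q) a"
  unfolding solves_def sep_rel_def using Erow_lin[of q _ a] unfolding Erow_def by auto

lemma sep_rel_bar_solves: "supp_ok m nk a \<and> sep_rel_bar s n m nk \<alpha> \<phi> q a \<longleftrightarrow> solves n m nk (Cofb q) (bbar q) a"
  unfolding solves_def sep_rel_bar_def using Ebrow_lin[of q _ a] unfolding Ebrow_def by auto

lemma nondeg_ninj: "nondeg n m nk \<phi> q \<longleftrightarrow> ninj n m nk (Cof q)"
  unfolding nondeg_def ninj_def lsum_def Cof_def by simp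

lemma ninj_cong: "(\<And>j k i. j \<in> {1..n} \<Longrightarrow> C j k i = C' j k i) \<Longrightarrow> ninj n m nk C \<longleftrightarrow> ninj n m nk C'"
  unfolding ninj_def lsum_def by simp

lemma H_solves: "ninj n m nk (Cof q) \<Longrightarrow> solves n m nk (Cof q) (bold q) (H n m nk \<alpha> \<phi> q)"
proof -
  assume i: "ninj n m nk (Cof q)"
  obtain a where a: "solves n m nk (Cof q) (bold q) a" using solves_exists[OF nsum i] by blast
  have "H n m nk \<alpha> \<phi> q = a" unfolding H_def sep_rel_solves
    using a solves_unique[OF i] by blast
  thus ?thesis using a by simp
qed

lemma Hbar_solves: "ninj n m nk (Cofb q) \<Longrightarrow> solves n m nk (Cofb q) (bbar q) (Hbar s n m nk \<alpha> \<phi> q)"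
proof -
  assume i: "ninj n m nk (Cofb q)"
  obtain a where a: "solves n m nk (Cofb q) (bbar q) a" using solves_exists[OF nsum i] by blast
  have "Hbar s n m nk \<alpha> \<phi> q = a" unfolding Hbar_def sep_rel_bar_solves
    using a solves_unique[OF i] by blast
  thus ?thesis using a by simp
qed

lemma H_eq_solves: "ninj n m nk (Cof q) \<Longrightarrow> solves n m nk (Cof q) (bold q) a \<Longrightarrow> H n m nk \<alpha> \<phi> q = a"
  using H_solves solves_unique by blast

lemma Hbar_eq_solves: "ninj n m nk (Cofb q) \<Longrightarrow> solves n m nk (Cofb q) (bbar q) a \<Longrightarrow> Hbar s n m nk \<alpha> \<phi> q = a"
  using Hbar_solves solves_unique by blast


definition "dpsi nkk c a x = (\<Sum>r=1..\<alpha>. c r * (real (nkk - 1 + r) * x ^ (nkk - 1 + r - Suc 0)))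
   + (\<Sum>i=1..nkk. a i * (real (nkk - i) * x ^ (nkk - i - Suc 0)))"

lemma psi_deriv: "((\<lambda>x. psi nkk \<alpha> c a x) has_real_derivative dpsi nkk c a x) (at x)"
  unfolding psi_def dpsi_def
  by (intro DERIV_add DERIV_sum DERIV_cmult DERIV_pow)

definition "ErowL q l a = D1 0 (lam q l, mu q l) + (\<Sum>k=1..m. D1 k (lam q l, mu q l) * psi (nk k) \<alpha> (cc q k) (a k) (lam q l)
    + \<phi> k (lam q l, mu q l) * dpsi (nk k) (cc q k) (a k) (lam q l))"
definition "ErowM q l a = D2 0 (lam q l, mu q l) + (\<Sum>k=1..m. D2 k (lam q l, mu q l) * psi (nk k) \<alpha> (cc q k) (a k) (lam q l))"

lemma phi_chain:
  assumes k: "k \<in> {0..m}" and x: "(x has_real_derivative x') (at 0)" and y: "(y has_real_derivative y') (at 0)"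
  shows "((\<lambda>t. \<phi> k (x t, y t)) has_real_derivative D1 k (x 0, y 0) * x' + D2 k (x 0, y 0) * y') (at 0)"
  by (rule chain2[OF phiD[OF k] x y])

lemma Erow_deriv:
  assumes dl: "((\<lambda>t. lam (\<gamma> t) l) has_real_derivative dl) (at 0)"
    and dm: "((\<lambda>t. mu (\<gamma> t) l) has_real_derivative dm) (at 0)"
    and c: "\<forall>t. cc (\<gamma> t) = cc (\<gamma> 0)"
  shows "((\<lambda>t. Erow (\<gamma> t) l a) has_real_derivative ErowL (\<gamma> 0) l a * dl + ErowM (\<gamma> 0) l a * dm) (at 0)"
proof -
  define z where "z = (lam (\<gamma> 0) l, mu (\<gamma> 0) l)"
  define c0 where "c0 = cc (\<gamma> 0)"
  have eq: "(\<lambda>t. Erow (\<gamma> t) l a) = (\<lambda>t. \<phi> 0 (lam (\<gamma> t) l, mu (\<gamma> t) l)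
     + (\<Sum>k=1..m. \<phi> k (lam (\<gamma> t) l, mu (\<gamma> t) l) * psi (nk k) \<alpha> (c0 k) (a k) (lam (\<gamma> t) l)))"
  proof -
    have ct: "\<And>t. cc (\<gamma> t) = c0" using c unfolding c0_def by simp
    show ?thesis unfolding Erow_def using ct by simp
  qed
  have d0: "((\<lambda>t. \<phi> 0 (lam (\<gamma> t) l, mu (\<gamma> t) l)) has_real_derivative D1 0 z * dl + D2 0 z * dm) (at 0)"
    unfolding z_def by (rule phi_chain[OF _ dl dm]) simp
  have dk: "((\<lambda>t. \<phi> k (lam (\<gamma> t) l, mu (\<gamma> t) l) * psi (nk k) \<alpha> (c0 k) (a k) (lam (\<gamma> t) l)) has_real_derivative
      (D1 k z * dl + D2 k z * dm) * psi (nk k) \<alpha> (c0 k) (a k) (lam (\<gamma> 0) l)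
      + (dpsi (nk k) (c0 k) (a k) (lam (\<gamma> 0) l) * dl) * \<phi> k z) (at 0)" if k: "k \<in> {1..m}" for k
  proof -
    have "((\<lambda>t. psi (nk k) \<alpha> (c0 k) (a k) (lam (\<gamma> t) l)) has_real_derivative dpsi (nk k) (c0 k) (a k) (lam (\<gamma> 0) l) * dl) (at 0)"
      by (rule DERIV_chain2[OF psi_deriv dl])
    from DERIV_mult[OF phi_chain[OF _ dl dm] this] k show ?thesis unfolding z_def by simp
  qed
  have "((\<lambda>t. Erow (\<gamma> t) l a) has_real_derivative D1 0 z * dl + D2 0 z * dm +
     (\<Sum>k=1..m. (D1 k z * dl + D2 k z * dm) * psi (nk k) \<alpha> (c0 k) (a k) (lam (\<gamma> 0) l)
      + (dpsi (nk k) (c0 k) (a k) (lam (\<gamma> 0) l) * dl) * \<phi> k z)) (at 0)"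
    unfolding eq by (intro DERIV_add d0 DERIV_sum dk) simp
  moreover have "D1 0 z * dl + D2 0 z * dm +
     (\<Sum>k=1..m. (D1 k z * dl + D2 k z * dm) * psi (nk k) \<alpha> (c0 k) (a k) (lam (\<gamma> 0) l)
      + (dpsi (nk k) (c0 k) (a k) (lam (\<gamma> 0) l) * dl) * \<phi> k z) = ErowL (\<gamma> 0) l a * dl + ErowM (\<gamma> 0) l a * dm"
    unfolding ErowL_def ErowM_def z_def c0_def
    by (simp add: algebra_simps sum.distrib sum_distrib_left sum_distrib_right)
  ultimately show ?thesis by simp
qed

definition "unitv k i = (\<lambda>k' i'. if (k',i') = (k,i) then 1 else (0::real))"

lemma lsum_unitv: "(k,i) \<in> PI m nk \<Longrightarrow> lsum m nk C (unitv k i) = C k i"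
proof -
  assume ki: "(k,i) \<in> PI m nk"
  have "lsum m nk C (unitv k i) = (\<Sum>x\<in>PI m nk. if x = (k,i) then C k i else 0)"
    unfolding lsum_PI unitv_def by (intro sum.cong) (auto simp: case_prod_beta)
  also have "\<dots> = C k i" using ki by (simp add: sum.delta)
  finally show ?thesis .
qed

lemma lsum_zero: "lsum m nk C (\<lambda>_ _. 0) = 0" unfolding lsum_def by simp


lemma GLa:
  assumes ev: "eventually (\<lambda>t. ninj n m nk (C t) \<and> solves n m nk (C t) (b t) (x t)) (nhds 0)"
    and dE: "\<forall>l\<in>{1..n}. \<forall>a. \<exists>D. ((\<lambda>t. lsum m nk (C t l) a - b t l) has_real_derivative D) (at 0)"
    and E': "\<forall>l\<in>{1..n}. ((\<lambda>t. lsum m nk (C t l) (x 0) - b t l) has_real_derivative E' l) (at 0)"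
  shows "\<exists>x'. supp_ok m nk x' \<and> (\<forall>l\<in>{1..n}. lsum m nk (C 0 l) x' = - E' l)
     \<and> (\<forall>k i. ((\<lambda>t. x t k i) has_real_derivative x' k i) (at 0))"
proof -
  have db: "\<exists>D. ((\<lambda>t. b t l) has_real_derivative D) (at 0)" if l: "l \<in> {1..n}" for l
  proof -
    obtain D where "((\<lambda>t. lsum m nk (C t l) (\<lambda>_ _. 0) - b t l) has_real_derivative D) (at 0)" using dE l by blast
    then have "((\<lambda>t. - b t l) has_real_derivative D) (at 0)" by (simp add: lsum_zero)
    from DERIV_minus[OF this] show ?thesis by auto
  qed
  have dC: "\<exists>D. ((\<lambda>t. C t l k i) has_real_derivative D) (at 0)" if l: "l \<in> {1..n}" and ki: "(k,i) \<in> PI m nk" for l k i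
  proof -
    obtain D where "((\<lambda>t. lsum m nk (C t l) (unitv k i) - b t l) has_real_derivative D) (at 0)" using dE l by blast
    then have "((\<lambda>t. C t l k i - b t l) has_real_derivative D) (at 0)" by (simp add: lsum_unitv[OF ki])
    moreover obtain D' where "((\<lambda>t. b t l) has_real_derivative D') (at 0)" using db l by blast
    ultimately have "((\<lambda>t. (C t l k i - b t l) + b t l) has_real_derivative D + D') (at 0)" by (rule DERIV_add)
    then show ?thesis by auto
  qed
  define C' where "C' l k i = (SOME D. ((\<lambda>t. C t l k i) has_real_derivative D) (at 0))" for l k i
  define b' where "b' l = (SOME D. ((\<lambda>t. b t l) has_real_derivative D) (at 0))" for l
  have C': "\<forall>j\<in>{1..n}. \<forall>k i. (k,i) \<in> PI m nk \<longrightarrow> ((\<lambda>t. C t j k i) has_real_derivative C' j k i) (at 0)"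
    unfolding C'_def using dC by (metis (no_types, lifting) someI_ex)
  have b': "\<forall>j\<in>{1..n}. ((\<lambda>t. b t j) has_real_derivative b' j) (at 0)"
    unfolding b'_def using db by (metis (no_types, lifting) someI_ex)
  obtain x' where x': "supp_ok m nk x'" "\<forall>j\<in>{1..n}. lsum m nk (C 0 j) x' + lsum m nk (C' j) (x 0) = b' j"
    "\<forall>k i. ((\<lambda>t. x t k i) has_real_derivative x' k i) (at 0)"
    using solves_diff[OF nsum C' b' ev] by blast
  have "lsum m nk (C 0 l) x' = - E' l" if l: "l \<in> {1..n}" for l
  proof -
    have "((\<lambda>t. lsum m nk (C t l) (x 0) - b t l) has_real_derivative lsum m nk (C' l) (x 0) - b' l) (at 0)"
      unfolding lsum_PI case_prod_beta
      by (intro DERIV_diff DERIV_sum DERIV_cmult_right) (use C' b' l in \<open>auto simp: case_prod_beta\<close>)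
    from DERIV_unique[OF this] E' l have "E' l = lsum m nk (C' l) (x 0) - b' l" by force
    moreover have "lsum m nk (C 0 l) x' + lsum m nk (C' l) (x 0) = b' l" using x'(2) l by blast
    ultimately show ?thesis by simp
  qed
  thus ?thesis using x' by blast
qed

end



lemma split_ivl:
  fixes f :: "nat \<Rightarrow> real" and s N :: nat
  assumes "s \<le> N" shows "(\<Sum>i=1..N. f i) = (\<Sum>i=1..s. f i) + (\<Sum>i=s+1..N. f i)"
proof -
  have "{1..N} = {1..s} \<union> {s+1..N}" using assms by auto
  moreover have "{1..s} \<inter> {s+1..N} = {}" by auto
  ultimately show ?thesis by (simp add: sum.union_disjoint)
qed

lemma PID:
  fixes c a cb ab :: "nat \<Rightarrow> real"
  assumes s1: "1 \<le> s" and sa: "s \<le> \<alpha>" and aN: "\<alpha> \<le> N" and x: "x \<noteq> 0"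
    and h1: "\<forall>r\<in>{s+1..\<alpha>}. cb r = c r" and h2: "\<forall>r\<in>{1..s}. cb r = a (N - r + 1)"
    and h3: "\<forall>i\<in>{1..s}. ab i = c (s + 1 - i)" and h4: "\<forall>i\<in>{s+1..N}. ab i = a (i - s)"
  shows "psi N \<alpha> c a x = x^s * psibar s N \<alpha> cb ab x"
proof -
  have A: "x^s * (\<Sum>r=s+1..\<alpha>. cb r * x ^ (N + r - s - 1)) = (\<Sum>r=s+1..\<alpha>. c r * x ^ (N - 1 + r))"
    unfolding sum_distrib_left
  proof (rule sum.cong[OF refl])
    fix r assume r: "r \<in> {s+1..\<alpha>}"
    have "x^s * x ^ (N + r - s - 1) = x ^ (N - 1 + r)" using r aN by (simp add: power_add[symmetric])
    thus "x^s * (cb r * x ^ (N + r - s - 1)) = c r * x ^ (N - 1 + r)" using h1 r by (simp add: algebra_simps)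
  qed
  have B: "x^s * (\<Sum>i=1..N. ab i * x ^ (N - i)) = (\<Sum>r=1..s. c r * x ^ (N - 1 + r)) + (\<Sum>i=1..N-s. a i * x ^ (N - i))"
  proof -
    have "x^s * (\<Sum>i=1..N. ab i * x ^ (N - i)) = (\<Sum>i=1..N. ab i * x ^ (N - i + s))"
      unfolding sum_distrib_left
    proof (rule sum.cong[OF refl])
      fix i assume i: "i \<in> {1..N}"
      have "x^s * x ^ (N - i) = x ^ (N - i + s)" by (simp add: power_add)
      thus "x ^ s * (ab i * x ^ (N - i)) = ab i * x ^ (N - i + s)" by (simp add: algebra_simps)
    qed
    also have "\<dots> = (\<Sum>i=1..s. ab i * x ^ (N - i + s)) + (\<Sum>i=s+1..N. ab i * x ^ (N - i + s))"
      using sa aN by (intro split_ivl) simp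
    also have "(\<Sum>i=1..s. ab i * x ^ (N - i + s)) = (\<Sum>r=1..s. c r * x ^ (N - 1 + r))"
      by (rule sum.reindex_bij_witness[of _ "\<lambda>r. s + 1 - r" "\<lambda>r. s + 1 - r"]) (use h3 sa aN in auto)
    also have "(\<Sum>i=s+1..N. ab i * x ^ (N - i + s)) = (\<Sum>i=1..N-s. a i * x ^ (N - i))"
      by (rule sum.reindex_bij_witness[of _ "\<lambda>i. i + s" "\<lambda>i. i - s"]) (use h4 sa aN in auto)
    finally show ?thesis .
  qed
  have C: "x^s * (\<Sum>r=1..s. cb r / x ^ (s + 1 - r)) = (\<Sum>i=N-s+1..N. a i * x ^ (N - i))"
  proof -
    have "x^s * (\<Sum>r=1..s. cb r / x ^ (s + 1 - r)) = (\<Sum>r=1..s. cb r * x ^ (r - 1))"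
      unfolding sum_distrib_left
    proof (rule sum.cong[OF refl])
      fix r assume r: "r \<in> {1..s}"
      have "x^s = x ^ (s + 1 - r) * x ^ (r - 1)" using r by (simp add: power_add[symmetric])
      thus "x^s * (cb r / x ^ (s + 1 - r)) = cb r * x ^ (r - 1)" using x by simp
    qed
    also have "\<dots> = (\<Sum>i=N-s+1..N. a i * x ^ (N - i))"
      by (rule sum.reindex_bij_witness[of _ "\<lambda>i. N + 1 - i" "\<lambda>r. N + 1 - r"]) (use h2 sa aN in \<open>auto simp: Suc_diff_le\<close>)
    finally show ?thesis .
  qed
  have "psi N \<alpha> c a x = (\<Sum>r=1..s. c r * x ^ (N - 1 + r)) + (\<Sum>r=s+1..\<alpha>. c r * x ^ (N - 1 + r))
      + ((\<Sum>i=1..N-s. a i * x ^ (N - i)) + (\<Sum>i=N-s+1..N. a i * x ^ (N - i)))"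
    unfolding psi_def using split_ivl[of s \<alpha>] split_ivl[of "N-s" N] sa aN by simp
  also have "\<dots> = x^s * psibar s N \<alpha> cb ab x"
    unfolding psibar_def distrib_left A B C by simp
  finally show ?thesis .
qed

lemma cont_ev:
  fixes f :: "real \<Rightarrow> real"
  assumes "isCont f 0" "e > 0"
  shows "eventually (\<lambda>t. \<bar>f t - f 0\<bar> < e) (nhds 0)"
proof -
  have "(f \<longlongrightarrow> f 0) (at 0)" using assms(1) by (simp add: isCont_def)
  then have "eventually (\<lambda>t. dist (f t) (f 0) < e) (at 0)" using assms(2) tendsto_iff by blast
  then show ?thesis unfolding eventually_nhds_conv_at using assms(2) by (simp add: dist_real_def)
qed

context S12 begin

lemma EM:
  fixes \<gamma> :: "real \<Rightarrow> pt"
  assumes p: "p \<in> \<M>"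
    and cl: "\<forall>j\<in>{1..n}. isCont (\<lambda>t. lam (\<gamma> t) j) 0 \<and> isCont (\<lambda>t. mu (\<gamma> t) j) 0"
    and z: "\<forall>j\<in>{1..n}. lam (\<gamma> 0) j = lam p j \<and> mu (\<gamma> 0) j = mu p j"
    and o: "\<forall>t. \<forall>j. j \<notin> {1..n} \<longrightarrow> lam (\<gamma> t) j = lam p j \<and> mu (\<gamma> t) j = mu p j"
    and c: "\<forall>t. cc (\<gamma> t) = cc p"
  shows "eventually (\<lambda>t. \<gamma> t \<in> \<M>) (nhds 0)"
proof -
  obtain e where e: "e > 0" and ball: "\<forall>q. (\<forall>j\<in>{1..n}. \<bar>lam q j - lam p j\<bar> < e \<and> \<bar>mu q j - mu p j\<bar> < e) \<and>
     (\<forall>j. j \<notin> {1..n} \<longrightarrow> lam q j = lam p j \<and> mu q j = mu p j) \<and>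
     (\<forall>k\<in>{1..m}. \<forall>i\<in>{1..\<alpha>}. \<bar>cc q k i - cc p k i\<bar> < e) \<and>
     (\<forall>k i. \<not> (k \<in> {1..m} \<and> i \<in> {1..\<alpha>}) \<longrightarrow> cc q k i = cc p k i)
     \<longrightarrow> q \<in> \<M>"
    using opn p unfolding open_pts_def by blast
  have "\<forall>j\<in>{1..n}. eventually (\<lambda>t. \<bar>lam (\<gamma> t) j - lam p j\<bar> < e \<and> \<bar>mu (\<gamma> t) j - mu p j\<bar> < e) (nhds 0)"
  proof
    fix j assume j: "j \<in> {1..n}"
    show "eventually (\<lambda>t. \<bar>lam (\<gamma> t) j - lam p j\<bar> < e \<and> \<bar>mu (\<gamma> t) j - mu p j\<bar> < e) (nhds 0)"
      using cont_ev[of "\<lambda>t. lam (\<gamma> t) j" e] cont_ev[of "\<lambda>t. mu (\<gamma> t) j" e] cl z j e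
      by (auto intro: eventually_conj)
  qed
  then have "eventually (\<lambda>t. \<forall>j\<in>{1..n}. \<bar>lam (\<gamma> t) j - lam p j\<bar> < e \<and> \<bar>mu (\<gamma> t) j - mu p j\<bar> < e) (nhds 0)"
    by (intro eventually_ball_finite) auto
  then show ?thesis
  proof (rule eventually_mono)
    fix t assume h: "\<forall>j\<in>{1..n}. \<bar>lam (\<gamma> t) j - lam p j\<bar> < e \<and> \<bar>mu (\<gamma> t) j - mu p j\<bar> < e"
    show "\<gamma> t \<in> \<M>" by (rule ball[rule_format]) (use h o c e in auto)
  qed
qed

definition "rel c a cb ab \<longleftrightarrow> (\<forall>k\<in>{1..m}. (\<forall>r\<in>{s+1..\<alpha>}. cb k r = c k r) \<and> (\<forall>r\<in>{1..s}. cb k r = a k (nk k - r + 1))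
   \<and> (\<forall>i\<in>{1..s}. ab k i = c k (s + 1 - i)) \<and> (\<forall>i\<in>{s+1..nk k}. ab k i = a k (i - s)))"

lemma GID:
  assumes r: "rel (cc q') a (cc qb) ab" and l: "lam q' l = lam qb l" and nz: "lam qb l \<noteq> 0"
    and mq: "mu q' l = mu qb l * lam qb l ^ s"
  shows "Ebrow qb l ab = Erow q' l a / lam qb l ^ s"
proof -
  define x where "x = lam qb l"
  have ps: "psi (nk k) \<alpha> (cc q' k) (a k) x = x^s * psibar s (nk k) \<alpha> (cc qb k) (ab k) x" if k: "k \<in> {1..m}" for k
    using r k sr ank nz unfolding rel_def x_def by (intro PID) auto
  have "Erow q' l a = \<phi> 0 (x, mu qb l * x ^ s) + (\<Sum>k=1..m. \<phi> k (x, mu qb l * x ^ s) * (x^s * psibar s (nk k) \<alpha> (cc qb k) (ab k) x))"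
    unfolding Erow_def using l mq ps by (simp add: x_def)
  also have "\<dots> = x^s * Ebrow qb l ab"
    unfolding Ebrow_def x_def[symmetric] using nz
    by (simp add: x_def[symmetric] distrib_left sum_distrib_left mult_ac)
  finally show ?thesis using nz by (simp add: x_def)
qed

lemma rel_exists: "\<exists>c a. rel c a cb ab"
proof -
  define c where "c k r = (if r \<le> s then ab k (s + 1 - r) else cb k r)" for k r
  define a where "a k i = (if i \<le> nk k - s then ab k (i + s) else cb k (nk k - i + 1))" for k i
  have "rel c a cb ab" unfolding rel_def
  proof (rule ballI)
    fix k assume k: "k \<in> {1..m}"
    have "\<alpha> \<le> nk k" using k ank by auto
    then have snk: "s \<le> nk k" using sr by auto
    have 1: "\<forall>r\<in>{s + 1..\<alpha>}. cb k r = c k r" by (auto simp: c_def)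
    have 2: "\<forall>r\<in>{1..s}. cb k r = a k (nk k - r + 1)" using snk by (auto simp: a_def)
    have 3: "\<forall>i\<in>{1..s}. ab k i = c k (s + 1 - i)" by (auto simp: c_def)
    have 4: "\<forall>i\<in>{s + 1..nk k}. ab k i = a k (i - s)" using snk by (auto simp: a_def)
    show "(\<forall>r\<in>{s + 1..\<alpha>}. cb k r = c k r) \<and> (\<forall>r\<in>{1..s}. cb k r = a k (nk k - r + 1))
      \<and> (\<forall>i\<in>{1..s}. ab k i = c k (s + 1 - i)) \<and> (\<forall>i\<in>{s + 1..nk k}. ab k i = a k (i - s))"
      using 1 2 3 4 by blast
  qed
  thus ?thesis by blast
qed


definition "qc q c = (lam q, \<lambda>j. mu q j * lam q j ^ s, c)"
lemma qc_simps[simp]: "lam (qc q c) = lam q" "mu (qc q c) j = mu q j * lam q j ^ s" "cc (qc q c) = c"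
  by (simp_all add: qc_def lam_def mu_def cc_def)

lemma ev_nz:
  fixes f :: "real \<Rightarrow> real"
  assumes "isCont f 0" "f 0 \<noteq> 0" shows "eventually (\<lambda>t. f t \<noteq> 0) (nhds 0)"
proof -
  have "eventually (\<lambda>t. \<bar>f t - f 0\<bar> < \<bar>f 0\<bar>) (nhds 0)" using cont_ev[OF assms(1), of "\<bar>f 0\<bar>"] assms(2) by simp
  then show ?thesis by (rule eventually_mono) auto
qed

lemma Ebrow_deriv:
  fixes \<gamma> :: "real \<Rightarrow> pt"
  assumes r: "rel c a (cc (\<gamma> 0)) ab" and cst: "\<forall>t. cc (\<gamma> t) = cc (\<gamma> 0)" and nz: "lam (\<gamma> 0) l \<noteq> 0"
    and dl: "((\<lambda>t. lam (\<gamma> t) l) has_real_derivative dl) (at 0)"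
    and dm: "((\<lambda>t. mu (\<gamma> t) l) has_real_derivative dm) (at 0)"
  shows "((\<lambda>t. Ebrow (\<gamma> t) l ab) has_real_derivative
     ((ErowL (qc (\<gamma> 0) c) l a * dl + ErowM (qc (\<gamma> 0) c) l a *
         (dm * lam (\<gamma> 0) l ^ s + of_nat s * (dl * lam (\<gamma> 0) l ^ (s - Suc 0)) * mu (\<gamma> 0) l)) * lam (\<gamma> 0) l ^ s
      - Erow (qc (\<gamma> 0) c) l a * (of_nat s * (dl * lam (\<gamma> 0) l ^ (s - Suc 0))))
     / (lam (\<gamma> 0) l ^ s * lam (\<gamma> 0) l ^ s)) (at 0)"
proof -
  define q' where "q' t = qc (\<gamma> t) c" for t
  have evnz: "eventually (\<lambda>t. lam (\<gamma> t) l \<noteq> 0) (nhds 0)"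
    by (rule ev_nz[OF DERIV_isCont[OF dl] nz])
  have eq: "eventually (\<lambda>t. Ebrow (\<gamma> t) l ab = Erow (q' t) l a / lam (\<gamma> t) l ^ s) (nhds 0)"
    using evnz
  proof (rule eventually_mono)
    fix t assume "lam (\<gamma> t) l \<noteq> 0"
    moreover have "rel (cc (q' t)) a (cc (\<gamma> t)) ab" using r cst[rule_format, of t] by (simp add: q'_def)
    ultimately show "Ebrow (\<gamma> t) l ab = Erow (q' t) l a / lam (\<gamma> t) l ^ s"
      by (subst GID) (auto simp: q'_def)
  qed
  have dp: "((\<lambda>t. lam (\<gamma> t) l ^ s) has_real_derivative of_nat s * (dl * lam (\<gamma> 0) l ^ (s - Suc 0))) (at 0)"
    by (rule DERIV_power[OF dl])
  have dmq: "((\<lambda>t. mu (q' t) l) has_real_derivative dm * lam (\<gamma> 0) l ^ s + of_nat s * (dl * lam (\<gamma> 0) l ^ (s - Suc 0)) * mu (\<gamma> 0) l) (at 0)"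
    unfolding q'_def qc_simps by (rule DERIV_mult[OF dm dp])
  have dlq: "((\<lambda>t. lam (q' t) l) has_real_derivative dl) (at 0)" unfolding q'_def qc_simps by (rule dl)
  have dE: "((\<lambda>t. Erow (q' t) l a) has_real_derivative ErowL (q' 0) l a * dl + ErowM (q' 0) l a *
     (dm * lam (\<gamma> 0) l ^ s + of_nat s * (dl * lam (\<gamma> 0) l ^ (s - Suc 0)) * mu (\<gamma> 0) l)) (at 0)"
    by (rule Erow_deriv[OF dlq dmq]) (simp add: q'_def)
  have "((\<lambda>t. Erow (q' t) l a / lam (\<gamma> t) l ^ s) has_real_derivative
     ((ErowL (q' 0) l a * dl + ErowM (q' 0) l a *
         (dm * lam (\<gamma> 0) l ^ s + of_nat s * (dl * lam (\<gamma> 0) l ^ (s - Suc 0)) * mu (\<gamma> 0) l)) * lam (\<gamma> 0) l ^ s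
      - Erow (q' 0) l a * (of_nat s * (dl * lam (\<gamma> 0) l ^ (s - Suc 0))))
     / (lam (\<gamma> 0) l ^ s * lam (\<gamma> 0) l ^ s)) (at 0)"
    by (rule DERIV_divide[OF dE dp]) (use nz in simp)
  then show ?thesis unfolding q'_def using DERIV_cong_ev[OF refl eq refl] by (simp add: q'_def)
qed

end

context S12 begin

lemma old_GL:
  fixes \<gamma> :: "real \<Rightarrow> pt"
  assumes ev: "eventually (\<lambda>t. \<gamma> t \<in> \<M>) (nhds 0)"
    and cst: "\<forall>t. cc (\<gamma> t) = cc (\<gamma> 0)"
    and dl: "\<forall>l\<in>{1..n}. ((\<lambda>t. lam (\<gamma> t) l) has_real_derivative dl l) (at 0)"
    and dm: "\<forall>l\<in>{1..n}. ((\<lambda>t. mu (\<gamma> t) l) has_real_derivative dm l) (at 0)"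
  shows "\<exists>x'. supp_ok m nk x' \<and> (\<forall>l\<in>{1..n}. lsum m nk (Cof (\<gamma> 0) l) x' =
      - (ErowL (\<gamma> 0) l (H n m nk \<alpha> \<phi> (\<gamma> 0)) * dl l + ErowM (\<gamma> 0) l (H n m nk \<alpha> \<phi> (\<gamma> 0)) * dm l))
     \<and> (\<forall>k i. ((\<lambda>t. H n m nk \<alpha> \<phi> (\<gamma> t) k i) has_real_derivative x' k i) (at 0))"
proof (rule GLa[where C="\<lambda>t. Cof (\<gamma> t)" and b="\<lambda>t. bold (\<gamma> t)" and x="\<lambda>t. H n m nk \<alpha> \<phi> (\<gamma> t)"])
  show "eventually (\<lambda>t. ninj n m nk (Cof (\<gamma> t)) \<and> solves n m nk (Cof (\<gamma> t)) (bold (\<gamma> t)) (H n m nk \<alpha> \<phi> (\<gamma> t))) (nhds 0)"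
    using ev by (rule eventually_mono) (use nondg H_solves nondeg_ninj in blast)
  show "\<forall>l\<in>{1..n}. \<forall>a. \<exists>D. ((\<lambda>t. lsum m nk (Cof (\<gamma> t) l) a - bold (\<gamma> t) l) has_real_derivative D) (at 0)"
    using Erow_deriv[OF _ _ cst] dl dm unfolding Erow_lin[symmetric] by blast
  show "\<forall>l\<in>{1..n}. ((\<lambda>t. lsum m nk (Cof (\<gamma> t) l) (H n m nk \<alpha> \<phi> (\<gamma> 0)) - bold (\<gamma> t) l) has_real_derivative
      ErowL (\<gamma> 0) l (H n m nk \<alpha> \<phi> (\<gamma> 0)) * dl l + ErowM (\<gamma> 0) l (H n m nk \<alpha> \<phi> (\<gamma> 0)) * dm l) (at 0)"
    using Erow_deriv[OF _ _ cst] dl dm unfolding Erow_lin[symmetric] by blast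
qed


lemma bar_GL:
  fixes \<gamma> :: "real \<Rightarrow> pt"
  assumes ev: "eventually (\<lambda>t. ninj n m nk (Cofb (\<gamma> t))) (nhds 0)"
    and cst: "\<forall>t. cc (\<gamma> t) = cc (\<gamma> 0)"
    and r: "rel c a (cc (\<gamma> 0)) (Hbar s n m nk \<alpha> \<phi> (\<gamma> 0))"
    and nz: "\<forall>l\<in>{1..n}. lam (\<gamma> 0) l \<noteq> 0"
    and dl: "\<forall>l\<in>{1..n}. ((\<lambda>t. lam (\<gamma> t) l) has_real_derivative dl l) (at 0)"
    and dm: "\<forall>l\<in>{1..n}. ((\<lambda>t. mu (\<gamma> t) l) has_real_derivative dm l) (at 0)"
  shows "\<exists>x'. supp_ok m nk x' \<and> (\<forall>l\<in>{1..n}. lsum m nk (Cofb (\<gamma> 0) l) x' =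
      - (((ErowL (qc (\<gamma> 0) c) l a * dl l + ErowM (qc (\<gamma> 0) c) l a *
         (dm l * lam (\<gamma> 0) l ^ s + of_nat s * (dl l * lam (\<gamma> 0) l ^ (s - Suc 0)) * mu (\<gamma> 0) l)) * lam (\<gamma> 0) l ^ s
      - Erow (qc (\<gamma> 0) c) l a * (of_nat s * (dl l * lam (\<gamma> 0) l ^ (s - Suc 0))))
     / (lam (\<gamma> 0) l ^ s * lam (\<gamma> 0) l ^ s)))
     \<and> (\<forall>k i. ((\<lambda>t. Hbar s n m nk \<alpha> \<phi> (\<gamma> t) k i) has_real_derivative x' k i) (at 0))"
proof (rule GLa[where C="\<lambda>t. Cofb (\<gamma> t)" and b="\<lambda>t. bbar (\<gamma> t)" and x="\<lambda>t. Hbar s n m nk \<alpha> \<phi> (\<gamma> t)"])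
  show "eventually (\<lambda>t. ninj n m nk (Cofb (\<gamma> t)) \<and> solves n m nk (Cofb (\<gamma> t)) (bbar (\<gamma> t)) (Hbar s n m nk \<alpha> \<phi> (\<gamma> t))) (nhds 0)"
    using ev by (rule eventually_mono) (use Hbar_solves in blast)
  show "\<forall>l\<in>{1..n}. \<forall>ab. \<exists>D. ((\<lambda>t. lsum m nk (Cofb (\<gamma> t) l) ab - bbar (\<gamma> t) l) has_real_derivative D) (at 0)"
  proof (intro ballI allI)
    fix l ab assume l: "l \<in> {1..n}"
    obtain c' a' where "rel c' a' (cc (\<gamma> 0)) ab" using rel_exists by blast
    from Ebrow_deriv[OF this cst nz[rule_format, OF l] dl[rule_format, OF l] dm[rule_format, OF l]]
    show "\<exists>D. ((\<lambda>t. lsum m nk (Cofb (\<gamma> t) l) ab - bbar (\<gamma> t) l) has_real_derivative D) (at 0)"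
      unfolding Ebrow_lin by blast
  qed
  show "\<forall>l\<in>{1..n}. ((\<lambda>t. lsum m nk (Cofb (\<gamma> t) l) (Hbar s n m nk \<alpha> \<phi> (\<gamma> 0)) - bbar (\<gamma> t) l) has_real_derivative
     (((ErowL (qc (\<gamma> 0) c) l a * dl l + ErowM (qc (\<gamma> 0) c) l a *
         (dm l * lam (\<gamma> 0) l ^ s + of_nat s * (dl l * lam (\<gamma> 0) l ^ (s - Suc 0)) * mu (\<gamma> 0) l)) * lam (\<gamma> 0) l ^ s
      - Erow (qc (\<gamma> 0) c) l a * (of_nat s * (dl l * lam (\<gamma> 0) l ^ (s - Suc 0))))
     / (lam (\<gamma> 0) l ^ s * lam (\<gamma> 0) l ^ s))) (at 0)"
  proof (intro ballI)
    fix l assume l: "l \<in> {1..n}"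
    from Ebrow_deriv[OF r cst nz[rule_format, OF l] dl[rule_format, OF l] dm[rule_format, OF l]]
    show "((\<lambda>t. lsum m nk (Cofb (\<gamma> t) l) (Hbar s n m nk \<alpha> \<phi> (\<gamma> 0)) - bbar (\<gamma> t) l) has_real_derivative
     (((ErowL (qc (\<gamma> 0) c) l a * dl l + ErowM (qc (\<gamma> 0) c) l a *
         (dm l * lam (\<gamma> 0) l ^ s + of_nat s * (dl l * lam (\<gamma> 0) l ^ (s - Suc 0)) * mu (\<gamma> 0) l)) * lam (\<gamma> 0) l ^ s
      - Erow (qc (\<gamma> 0) c) l a * (of_nat s * (dl l * lam (\<gamma> 0) l ^ (s - Suc 0))))
     / (lam (\<gamma> 0) l ^ s * lam (\<gamma> 0) l ^ s))) (at 0)"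
      unfolding Ebrow_lin .
  qed
qed

lemma lsum_lin: "lsum m nk C (\<lambda>k i. u * y k i + w * z k i) = u * lsum m nk C y + w * lsum m nk C z"
  unfolding lsum_def by (simp add: sum.distrib sum_distrib_left algebra_simps)

lemma lin_comb_unique:
  assumes inj: "ninj n m nk C" and sx: "supp_ok m nk x" and sy: "supp_ok m nk y" and sz: "supp_ok m nk z"
    and eq: "\<forall>l\<in>{1..n}. lsum m nk (C l) x = u * lsum m nk (C l) y + w * lsum m nk (C l) z"
  shows "x k i = u * y k i + w * z k i"
proof -
  define d where "d k i = x k i - (u * y k i + w * z k i)" for k i
  have "supp_ok m nk d" using sx sy sz unfolding supp_ok_def d_def by auto
  moreover have "\<forall>l\<in>{1..n}. lsum m nk (C l) d = 0"
    using eq unfolding d_def lsum_diff lsum_lin by simp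
  ultimately have "\<forall>k i. d k i = 0" using inj unfolding ninj_def by blast
  thus ?thesis unfolding d_def by simp
qed

lemma row_cong:
  assumes "lam q l = lam q' l" "mu q l = mu q' l" "cc q = cc q'"
  shows "Erow q l a = Erow q' l a" "ErowL q l a = ErowL q' l a" "ErowM q l a = ErowM q' l a"
  using assms unfolding Erow_def ErowL_def ErowM_def by simp_all

lemma H_rows:
  assumes "\<forall>j\<in>{1..n}. lam q j = lam q' j \<and> mu q j = mu q' j" "cc q = cc q'"
  shows "H n m nk \<alpha> \<phi> q = H n m nk \<alpha> \<phi> q'"
proof -
  have "sep_rel n m nk \<alpha> \<phi> q = sep_rel n m nk \<alpha> \<phi> q'"
    using assms unfolding sep_rel_def by (intro ext) simp
  thus ?thesis unfolding H_def by simp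
qed


lemma tup_simps[simp]: "lam (x, y, z) = x" "mu (x, y, z) = y" "cc (x, y, z) = z" "(lam p, mu p, cc p) = p"
  by (simp_all add: lam_def mu_def cc_def)

lemma Miura_simps:
  "lam (Miura s n m nk \<alpha> \<phi> p) = lam p"
  "mu (Miura s n m nk \<alpha> \<phi> p) j = mu p j / lam p j ^ s"
  "cc (Miura s n m nk \<alpha> \<phi> p) = (\<lambda>k i. if 1 \<le> i \<and> i \<le> s then H n m nk \<alpha> \<phi> p k (nk k - i + 1) else cc p k i)"
  by (simp_all add: Miura_def)

definition "ab0 p k i = (if (k,i) \<in> PI m nk then (if i \<le> s then cc p k (s + 1 - i) else H n m nk \<alpha> \<phi> p k (i - s)) else 0)"

lemma at_p_basic:
  assumes p: "p \<in> \<M>"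
  shows "ninj n m nk (Cof p)" "solves n m nk (Cof p) (bold p) (H n m nk \<alpha> \<phi> p)"
    "\<forall>l\<in>{1..n}. Erow p l (H n m nk \<alpha> \<phi> p) = 0"
proof -
  show i: "ninj n m nk (Cof p)" using nondg p nondeg_ninj by blast
  show s: "solves n m nk (Cof p) (bold p) (H n m nk \<alpha> \<phi> p)" by (rule H_solves[OF i])
  show "\<forall>l\<in>{1..n}. Erow p l (H n m nk \<alpha> \<phi> p) = 0" using s unfolding solves_def Erow_lin by simp
qed

lemma rel_Mp: "rel (cc p) (H n m nk \<alpha> \<phi> p) (cc (Miura s n m nk \<alpha> \<phi> p)) (ab0 p)"
  unfolding rel_def
proof (rule ballI)
  fix k assume k: "k \<in> {1..m}"
  have "\<alpha> \<le> nk k" using k ank by auto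
  then have snk: "s \<le> nk k" using sr by auto
  show "(\<forall>r\<in>{s + 1..\<alpha>}. cc (Miura s n m nk \<alpha> \<phi> p) k r = cc p k r) \<and>
    (\<forall>r\<in>{1..s}. cc (Miura s n m nk \<alpha> \<phi> p) k r = H n m nk \<alpha> \<phi> p k (nk k - r + 1)) \<and>
    (\<forall>i\<in>{1..s}. ab0 p k i = cc p k (s + 1 - i)) \<and> (\<forall>i\<in>{s + 1..nk k}. ab0 p k i = H n m nk \<alpha> \<phi> p k (i - s))"
    using k snk by (auto simp: Miura_simps ab0_def mem_PI)
qed

lemma Cofb_Mp: "p \<in> \<M> \<Longrightarrow> l \<in> {1..n} \<Longrightarrow> Cofb (Miura s n m nk \<alpha> \<phi> p) l = Cof p l"
  using lnz unfolding Cofb_def Cof_def by (intro ext) (simp add: Miura_simps)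

lemma Hbar_Mp:
  assumes p: "p \<in> \<M>"
  shows "Hbar s n m nk \<alpha> \<phi> (Miura s n m nk \<alpha> \<phi> p) = ab0 p"
proof (rule Hbar_eq_solves)
  show i: "ninj n m nk (Cofb (Miura s n m nk \<alpha> \<phi> p))"
    using at_p_basic(1)[OF p] ninj_cong[of "Cofb (Miura s n m nk \<alpha> \<phi> p)" "Cof p"] Cofb_Mp[OF p] by simp
  show "solves n m nk (Cofb (Miura s n m nk \<alpha> \<phi> p)) (bbar (Miura s n m nk \<alpha> \<phi> p)) (ab0 p)"
    unfolding solves_def
  proof (intro conjI ballI)
    show "supp_ok m nk (ab0 p)" by (auto simp: supp_ok_PI ab0_def)
    fix l assume l: "l \<in> {1..n}"
    have nz: "lam p l \<noteq> 0" using lnz p l by blast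
    have "Ebrow (Miura s n m nk \<alpha> \<phi> p) l (ab0 p) = Erow p l (H n m nk \<alpha> \<phi> p) / lam (Miura s n m nk \<alpha> \<phi> p) l ^ s"
      by (rule GID[OF rel_Mp]) (use nz in \<open>simp_all add: Miura_simps\<close>)
    then have "Ebrow (Miura s n m nk \<alpha> \<phi> p) l (ab0 p) = 0" using at_p_basic(3)[OF p] l by simp
    then show "lsum m nk (Cofb (Miura s n m nk \<alpha> \<phi> p) l) (ab0 p) = bbar (Miura s n m nk \<alpha> \<phi> p) l"
      unfolding Ebrow_lin by simp
  qed
qed

lemma qc_Mp_rows:
  assumes p: "p \<in> \<M>" and l: "l \<in> {1..n}"
  shows "Erow (qc (Miura s n m nk \<alpha> \<phi> p) (cc p)) l a = Erow p l a"
    "ErowL (qc (Miura s n m nk \<alpha> \<phi> p) (cc p)) l a = ErowL p l a"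
    "ErowM (qc (Miura s n m nk \<alpha> \<phi> p) (cc p)) l a = ErowM p l a"
  using lnz p l by (auto intro!: row_cong simp: Miura_simps)

lemma DERIV_upd: "((\<lambda>t. (f(j := f j + t)) l) has_real_derivative (if l = j then 1 else 0)) (at 0)"
  by (cases "l = j") (auto intro!: derivative_eq_intros)


lemma isCont_if_upd: "isCont (\<lambda>t. if l = j then a + t else b) (0::real)"
  by (cases "l = j") (auto intro!: continuous_intros)

lemma DERIV_plus_c: "((+) (a::real) has_real_derivative 1) (at x)"
  using DERIV_add[OF DERIV_const[of a] DERIV_ident] by simp

lemma dmuH:
  assumes p: "p \<in> \<M>" and j: "j \<in> {1..n}"
  shows "\<exists>x'. supp_ok m nk x' \<and> (\<forall>l\<in>{1..n}. lsum m nk (Cof p l) x' = - (ErowM p l (H n m nk \<alpha> \<phi> p) * (if l = j then 1 else 0)))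
     \<and> (\<forall>k i. ((\<lambda>t. H n m nk \<alpha> \<phi> (lam p, (mu p)(j := mu p j + t), cc p) k i) has_real_derivative x' k i) (at 0))"
proof -
  define \<gamma> where "\<gamma> t = (lam p, (mu p)(j := mu p j + t), cc p)" for t
  have g0: "\<gamma> 0 = p" unfolding \<gamma>_def by simp
  have ev: "eventually (\<lambda>t. \<gamma> t \<in> \<M>) (nhds 0)"
    by (rule EM[OF p]) (use j in \<open>auto simp: \<gamma>_def intro: isCont_if_upd\<close>)
  have "\<exists>x'. supp_ok m nk x' \<and> (\<forall>l\<in>{1..n}. lsum m nk (Cof (\<gamma> 0) l) x' =
      - (ErowL (\<gamma> 0) l (H n m nk \<alpha> \<phi> (\<gamma> 0)) * 0 + ErowM (\<gamma> 0) l (H n m nk \<alpha> \<phi> (\<gamma> 0)) * (if l = j then 1 else 0)))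
     \<and> (\<forall>k i. ((\<lambda>t. H n m nk \<alpha> \<phi> (\<gamma> t) k i) has_real_derivative x' k i) (at 0))"
    by (rule old_GL[OF ev]) (auto simp: \<gamma>_def intro: DERIV_upd DERIV_plus_c)
  then show ?thesis unfolding g0 by (simp add: \<gamma>_def)
qed

lemma dlamH:
  assumes p: "p \<in> \<M>" and j: "j \<in> {1..n}"
  shows "\<exists>x'. supp_ok m nk x' \<and> (\<forall>l\<in>{1..n}. lsum m nk (Cof p l) x' = - (ErowL p l (H n m nk \<alpha> \<phi> p) * (if l = j then 1 else 0)))
     \<and> (\<forall>k i. ((\<lambda>t. H n m nk \<alpha> \<phi> ((lam p)(j := lam p j + t), mu p, cc p) k i) has_real_derivative x' k i) (at 0))"
proof -
  define \<gamma> where "\<gamma> t = ((lam p)(j := lam p j + t), mu p, cc p)" for t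
  have g0: "\<gamma> 0 = p" unfolding \<gamma>_def by simp
  have ev: "eventually (\<lambda>t. \<gamma> t \<in> \<M>) (nhds 0)"
    by (rule EM[OF p]) (use j in \<open>auto simp: \<gamma>_def intro: isCont_if_upd\<close>)
  have "\<exists>x'. supp_ok m nk x' \<and> (\<forall>l\<in>{1..n}. lsum m nk (Cof (\<gamma> 0) l) x' =
      - (ErowL (\<gamma> 0) l (H n m nk \<alpha> \<phi> (\<gamma> 0)) * (if l = j then 1 else 0) + ErowM (\<gamma> 0) l (H n m nk \<alpha> \<phi> (\<gamma> 0)) * 0))
     \<and> (\<forall>k i. ((\<lambda>t. H n m nk \<alpha> \<phi> (\<gamma> t) k i) has_real_derivative x' k i) (at 0))"
    by (rule old_GL[OF ev]) (auto simp: \<gamma>_def intro: DERIV_upd DERIV_plus_c)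
  then show ?thesis unfolding g0 by (simp add: \<gamma>_def)
qed


lemma bar_ev:
  fixes \<gamma> :: "real \<Rightarrow> pt"
  assumes p: "p \<in> \<M>" and g0: "\<gamma> 0 = Miura s n m nk \<alpha> \<phi> p"
    and out: "\<forall>t l. l \<notin> {1..n} \<longrightarrow> lam (\<gamma> t) l = lam p l"
    and cl: "\<forall>l\<in>{1..n}. isCont (\<lambda>t. lam (\<gamma> t) l) 0 \<and> isCont (\<lambda>t. mu (\<gamma> t) l) 0"
  shows "eventually (\<lambda>t. ninj n m nk (Cofb (\<gamma> t))) (nhds 0)"
proof -
  define u where "u t = (lam (\<gamma> t), \<lambda>l. if l \<in> {1..n} then mu (\<gamma> t) l * lam (\<gamma> t) l ^ s else mu p l, cc p)" for t
  have "eventually (\<lambda>t. u t \<in> \<M>) (nhds 0)"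
  proof (rule EM[OF p])
    show "\<forall>j\<in>{1..n}. isCont (\<lambda>t. lam (u t) j) 0 \<and> isCont (\<lambda>t. mu (u t) j) 0"
      using cl by (auto simp: u_def intro!: continuous_intros)
    show "\<forall>j\<in>{1..n}. lam (u 0) j = lam p j \<and> mu (u 0) j = mu p j"
      using lnz p by (auto simp: u_def g0 Miura_simps)
    show "\<forall>t j. j \<notin> {1..n} \<longrightarrow> lam (u t) j = lam p j \<and> mu (u t) j = mu p j"
      using out by (auto simp: u_def)
    show "\<forall>t. cc (u t) = cc p" by (simp add: u_def)
  qed
  then show ?thesis
  proof (rule eventually_mono)
    fix t assume "u t \<in> \<M>"
    then have "ninj n m nk (Cof (u t))" using nondg nondeg_ninj by blast
    moreover have "\<And>j k i. j \<in> {1..n} \<Longrightarrow> Cofb (\<gamma> t) j k i = Cof (u t) j k i"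
      by (simp add: Cofb_def Cof_def u_def)
    ultimately show "ninj n m nk (Cofb (\<gamma> t))" using ninj_cong by blast
  qed
qed

lemma dmuHbar:
  assumes p: "p \<in> \<M>" and j: "j \<in> {1..n}"
  shows "\<exists>x'. supp_ok m nk x' \<and> (\<forall>l\<in>{1..n}. lsum m nk (Cof p l) x' = - (ErowM p l (H n m nk \<alpha> \<phi> p) * (if l = j then 1 else 0)))
     \<and> (\<forall>k i. ((\<lambda>t. Hbar s n m nk \<alpha> \<phi> (lam (Miura s n m nk \<alpha> \<phi> p), (mu (Miura s n m nk \<alpha> \<phi> p))(j := mu (Miura s n m nk \<alpha> \<phi> p) j + t), cc (Miura s n m nk \<alpha> \<phi> p)) k i) has_real_derivative x' k i) (at 0))"
proof -
  define MP where "MP = Miura s n m nk \<alpha> \<phi> p"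
  define \<gamma> where "\<gamma> t = (lam MP, (mu MP)(j := mu MP j + t), cc MP)" for t
  have g0: "\<gamma> 0 = MP" unfolding \<gamma>_def by simp
  have ev: "eventually (\<lambda>t. ninj n m nk (Cofb (\<gamma> t))) (nhds 0)"
    by (rule bar_ev[where \<gamma>=\<gamma>, OF p g0[unfolded MP_def]]) (use j in \<open>auto simp: \<gamma>_def g0 MP_def Miura_simps intro: isCont_if_upd\<close>)
  have r: "rel (cc p) (H n m nk \<alpha> \<phi> p) (cc (\<gamma> 0)) (Hbar s n m nk \<alpha> \<phi> (\<gamma> 0))"
    unfolding g0 MP_def Hbar_Mp[OF p] by (rule rel_Mp)
  have nz: "\<forall>l\<in>{1..n}. lam (\<gamma> 0) l \<noteq> 0" using lnz p by (simp add: g0 MP_def Miura_simps)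
  have ex: "\<exists>x'. supp_ok m nk x' \<and> (\<forall>l\<in>{1..n}. lsum m nk (Cofb (\<gamma> 0) l) x' =
      - (((ErowL (qc (\<gamma> 0) (cc p)) l (H n m nk \<alpha> \<phi> p) * 0 + ErowM (qc (\<gamma> 0) (cc p)) l (H n m nk \<alpha> \<phi> p) *
         ((if l = j then 1 else 0) * lam (\<gamma> 0) l ^ s + of_nat s * (0 * lam (\<gamma> 0) l ^ (s - Suc 0)) * mu (\<gamma> 0) l)) * lam (\<gamma> 0) l ^ s
      - Erow (qc (\<gamma> 0) (cc p)) l (H n m nk \<alpha> \<phi> p) * (of_nat s * (0 * lam (\<gamma> 0) l ^ (s - Suc 0))))
     / (lam (\<gamma> 0) l ^ s * lam (\<gamma> 0) l ^ s))) \<and> (\<forall>k i. ((\<lambda>t. Hbar s n m nk \<alpha> \<phi> (\<gamma> t) k i) has_real_derivative x' k i) (at 0))"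
    by (rule bar_GL[OF ev _ r nz, where dl="\<lambda>_. 0" and dm="\<lambda>l. if l = j then 1 else 0"]) (auto simp: \<gamma>_def intro: DERIV_upd DERIV_plus_c)
  obtain x' where x': "supp_ok m nk x'" and eq: "\<forall>l\<in>{1..n}. lsum m nk (Cofb (\<gamma> 0) l) x' =
      - (((ErowL (qc (\<gamma> 0) (cc p)) l (H n m nk \<alpha> \<phi> p) * 0 + ErowM (qc (\<gamma> 0) (cc p)) l (H n m nk \<alpha> \<phi> p) *
         ((if l = j then 1 else 0) * lam (\<gamma> 0) l ^ s + of_nat s * (0 * lam (\<gamma> 0) l ^ (s - Suc 0)) * mu (\<gamma> 0) l)) * lam (\<gamma> 0) l ^ s
      - Erow (qc (\<gamma> 0) (cc p)) l (H n m nk \<alpha> \<phi> p) * (of_nat s * (0 * lam (\<gamma> 0) l ^ (s - Suc 0))))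
     / (lam (\<gamma> 0) l ^ s * lam (\<gamma> 0) l ^ s))"
    and d: "\<forall>k i. ((\<lambda>t. Hbar s n m nk \<alpha> \<phi> (\<gamma> t) k i) has_real_derivative x' k i) (at 0)"
    using ex by blast
  have "\<forall>l\<in>{1..n}. lsum m nk (Cof p l) x' = - (ErowM p l (H n m nk \<alpha> \<phi> p) * (if l = j then 1 else 0))"
  proof
    fix l assume l: "l \<in> {1..n}"
    have nzl: "lam p l \<noteq> 0" using lnz p l by blast
    show "lsum m nk (Cof p l) x' = - (ErowM p l (H n m nk \<alpha> \<phi> p) * (if l = j then 1 else 0))"
      using eq[rule_format, OF l] nzl unfolding g0 MP_def qc_Mp_rows[OF p l] Cofb_Mp[OF p l]
      by (simp add: Miura_simps)
  qed
  then show ?thesis using x' d unfolding \<gamma>_def MP_def by blast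
qed

lemma dlamHbar:
  assumes p: "p \<in> \<M>" and j: "j \<in> {1..n}"
  shows "\<exists>x'. supp_ok m nk x' \<and> (\<forall>l\<in>{1..n}. lsum m nk (Cof p l) x' = - ((if l = j then 1 else 0) *
        (ErowL p l (H n m nk \<alpha> \<phi> p) / lam p l ^ s + ErowM p l (H n m nk \<alpha> \<phi> p) * (of_nat s * lam p l ^ (s - Suc 0) * mu p l) / (lam p l ^ s * lam p l ^ s))))
     \<and> (\<forall>k i. ((\<lambda>t. Hbar s n m nk \<alpha> \<phi> ((lam (Miura s n m nk \<alpha> \<phi> p))(j := lam (Miura s n m nk \<alpha> \<phi> p) j + t), mu (Miura s n m nk \<alpha> \<phi> p), cc (Miura s n m nk \<alpha> \<phi> p)) k i) has_real_derivative x' k i) (at 0))"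
proof -
  define MP where "MP = Miura s n m nk \<alpha> \<phi> p"
  define \<gamma> where "\<gamma> t = ((lam MP)(j := lam MP j + t), mu MP, cc MP)" for t
  have g0: "\<gamma> 0 = MP" unfolding \<gamma>_def by simp
  have ev: "eventually (\<lambda>t. ninj n m nk (Cofb (\<gamma> t))) (nhds 0)"
    by (rule bar_ev[where \<gamma>=\<gamma>, OF p g0[unfolded MP_def]]) (use j in \<open>auto simp: \<gamma>_def g0 MP_def Miura_simps intro: isCont_if_upd\<close>)
  have r: "rel (cc p) (H n m nk \<alpha> \<phi> p) (cc (\<gamma> 0)) (Hbar s n m nk \<alpha> \<phi> (\<gamma> 0))"
    unfolding g0 MP_def Hbar_Mp[OF p] by (rule rel_Mp)
  have nz: "\<forall>l\<in>{1..n}. lam (\<gamma> 0) l \<noteq> 0" using lnz p by (simp add: g0 MP_def Miura_simps)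
  have ex: "\<exists>x'. supp_ok m nk x' \<and> (\<forall>l\<in>{1..n}. lsum m nk (Cofb (\<gamma> 0) l) x' =
      - (((ErowL (qc (\<gamma> 0) (cc p)) l (H n m nk \<alpha> \<phi> p) * (if l = j then 1 else 0) + ErowM (qc (\<gamma> 0) (cc p)) l (H n m nk \<alpha> \<phi> p) *
         (0 * lam (\<gamma> 0) l ^ s + of_nat s * ((if l = j then 1 else 0) * lam (\<gamma> 0) l ^ (s - Suc 0)) * mu (\<gamma> 0) l)) * lam (\<gamma> 0) l ^ s
      - Erow (qc (\<gamma> 0) (cc p)) l (H n m nk \<alpha> \<phi> p) * (of_nat s * ((if l = j then 1 else 0) * lam (\<gamma> 0) l ^ (s - Suc 0))))
     / (lam (\<gamma> 0) l ^ s * lam (\<gamma> 0) l ^ s))) \<and> (\<forall>k i. ((\<lambda>t. Hbar s n m nk \<alpha> \<phi> (\<gamma> t) k i) has_real_derivative x' k i) (at 0))"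
    by (rule bar_GL[OF ev _ r nz, where dl="\<lambda>l. if l = j then 1 else 0" and dm="\<lambda>_. 0"]) (auto simp: \<gamma>_def intro: DERIV_upd DERIV_plus_c)
  obtain x' where x': "supp_ok m nk x'" and eq: "\<forall>l\<in>{1..n}. lsum m nk (Cofb (\<gamma> 0) l) x' =
      - (((ErowL (qc (\<gamma> 0) (cc p)) l (H n m nk \<alpha> \<phi> p) * (if l = j then 1 else 0) + ErowM (qc (\<gamma> 0) (cc p)) l (H n m nk \<alpha> \<phi> p) *
         (0 * lam (\<gamma> 0) l ^ s + of_nat s * ((if l = j then 1 else 0) * lam (\<gamma> 0) l ^ (s - Suc 0)) * mu (\<gamma> 0) l)) * lam (\<gamma> 0) l ^ s
      - Erow (qc (\<gamma> 0) (cc p)) l (H n m nk \<alpha> \<phi> p) * (of_nat s * ((if l = j then 1 else 0) * lam (\<gamma> 0) l ^ (s - Suc 0))))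
     / (lam (\<gamma> 0) l ^ s * lam (\<gamma> 0) l ^ s))"
    and d: "\<forall>k i. ((\<lambda>t. Hbar s n m nk \<alpha> \<phi> (\<gamma> t) k i) has_real_derivative x' k i) (at 0)"
    using ex by blast
  have "\<forall>l\<in>{1..n}. lsum m nk (Cof p l) x' = - ((if l = j then 1 else 0) *
        (ErowL p l (H n m nk \<alpha> \<phi> p) / lam p l ^ s + ErowM p l (H n m nk \<alpha> \<phi> p) * (of_nat s * lam p l ^ (s - Suc 0) * mu p l) / (lam p l ^ s * lam p l ^ s)))"
  proof
    fix l assume l: "l \<in> {1..n}"
    have nzl: "lam p l \<noteq> 0" using lnz p l by blast
    have E0: "Erow p l (H n m nk \<alpha> \<phi> p) = 0" using at_p_basic(3)[OF p] l by blast
    show "lsum m nk (Cof p l) x' = - ((if l = j then 1 else 0) *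
        (ErowL p l (H n m nk \<alpha> \<phi> p) / lam p l ^ s + ErowM p l (H n m nk \<alpha> \<phi> p) * (of_nat s * lam p l ^ (s - Suc 0) * mu p l) / (lam p l ^ s * lam p l ^ s)))"
      using eq[rule_format, OF l] nzl E0 unfolding g0 MP_def qc_Mp_rows[OF p l] Cofb_Mp[OF p l]
      by (cases "l = j") (simp_all add: Miura_simps field_simps)
  qed
  then show ?thesis using x' d unfolding \<gamma>_def MP_def by blast
qed

end

context S12 begin

lemma main_p:
  assumes p: "p \<in> \<M>" and k0: "k0 \<in> {1..m}" and i0: "i0 \<in> {1..nk k0}"
  shows "(let v = ham_vf (\<lambda>q. H n m nk \<alpha> \<phi> q k0 i0) p;
         w = ham_vf (\<lambda>q. Hbar s n m nk \<alpha> \<phi> q k0 i0) (Miura s n m nk \<alpha> \<phi> p);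
         F = (\<lambda>t. Miura s n m nk \<alpha> \<phi> (shift p t v))
     in (\<forall>j\<in>{1..n}. ((\<lambda>t. lam (F t) j) has_real_derivative lam w j) (at 0)
                  \<and> ((\<lambda>t. mu (F t) j) has_real_derivative mu w j) (at 0))
      \<and> (\<forall>k'\<in>{1..m}. \<forall>r\<in>{1..\<alpha>}. ((\<lambda>t. cc (F t) k' r) has_real_derivative cc w k' r) (at 0)))"
proof -
  define Hp where "Hp = H n m nk \<alpha> \<phi> p"
  define MP where "MP = Miura s n m nk \<alpha> \<phi> p"
  define L where "L l = ErowL p l Hp" for l
  define Mm where "Mm l = ErowM p l Hp" for l
  have inj: "ninj n m nk (Cof p)" by (rule at_p_basic(1)[OF p])
  have "\<forall>j\<in>{1..n}. \<exists>x'. supp_ok m nk x' \<and> (\<forall>l\<in>{1..n}. lsum m nk (Cof p l) x' = - (Mm l * (if l = j then 1 else 0)))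
     \<and> (\<forall>k i. ((\<lambda>t. H n m nk \<alpha> \<phi> (lam p, (mu p)(j := mu p j + t), cc p) k i) has_real_derivative x' k i) (at 0))"
    using dmuH[OF p] unfolding Mm_def Hp_def by blast
  from bchoice[OF this] obtain A where A: "\<forall>j\<in>{1..n}. supp_ok m nk (A j) \<and> (\<forall>l\<in>{1..n}. lsum m nk (Cof p l) (A j) = - (Mm l * (if l = j then 1 else 0)))
     \<and> (\<forall>k i. ((\<lambda>t. H n m nk \<alpha> \<phi> (lam p, (mu p)(j := mu p j + t), cc p) k i) has_real_derivative A j k i) (at 0))" ..
  have "\<forall>j\<in>{1..n}. \<exists>x'. supp_ok m nk x' \<and> (\<forall>l\<in>{1..n}. lsum m nk (Cof p l) x' = - (L l * (if l = j then 1 else 0)))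
     \<and> (\<forall>k i. ((\<lambda>t. H n m nk \<alpha> \<phi> ((lam p)(j := lam p j + t), mu p, cc p) k i) has_real_derivative x' k i) (at 0))"
    using dlamH[OF p] unfolding L_def Hp_def by blast
  from bchoice[OF this] obtain B where B: "\<forall>j\<in>{1..n}. supp_ok m nk (B j) \<and> (\<forall>l\<in>{1..n}. lsum m nk (Cof p l) (B j) = - (L l * (if l = j then 1 else 0)))
     \<and> (\<forall>k i. ((\<lambda>t. H n m nk \<alpha> \<phi> ((lam p)(j := lam p j + t), mu p, cc p) k i) has_real_derivative B j k i) (at 0))" ..
  have "\<forall>j\<in>{1..n}. \<exists>x'. supp_ok m nk x' \<and> (\<forall>l\<in>{1..n}. lsum m nk (Cof p l) x' = - (Mm l * (if l = j then 1 else 0)))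
     \<and> (\<forall>k i. ((\<lambda>t. Hbar s n m nk \<alpha> \<phi> (lam MP, (mu MP)(j := mu MP j + t), cc MP) k i) has_real_derivative x' k i) (at 0))"
    using dmuHbar[OF p] unfolding Mm_def Hp_def MP_def by blast
  from bchoice[OF this] obtain Ab where Ab: "\<forall>j\<in>{1..n}. supp_ok m nk (Ab j) \<and> (\<forall>l\<in>{1..n}. lsum m nk (Cof p l) (Ab j) = - (Mm l * (if l = j then 1 else 0)))
     \<and> (\<forall>k i. ((\<lambda>t. Hbar s n m nk \<alpha> \<phi> (lam MP, (mu MP)(j := mu MP j + t), cc MP) k i) has_real_derivative Ab j k i) (at 0))" ..
  have "\<forall>j\<in>{1..n}. \<exists>x'. supp_ok m nk x' \<and> (\<forall>l\<in>{1..n}. lsum m nk (Cof p l) x' = - ((if l = j then 1 else 0) *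
        (L l / lam p l ^ s + Mm l * (of_nat s * lam p l ^ (s - Suc 0) * mu p l) / (lam p l ^ s * lam p l ^ s))))
     \<and> (\<forall>k i. ((\<lambda>t. Hbar s n m nk \<alpha> \<phi> ((lam MP)(j := lam MP j + t), mu MP, cc MP) k i) has_real_derivative x' k i) (at 0))"
    using dlamHbar[OF p] unfolding L_def Mm_def Hp_def MP_def by blast
  from bchoice[OF this] obtain Bb where Bb: "\<forall>j\<in>{1..n}. supp_ok m nk (Bb j) \<and> (\<forall>l\<in>{1..n}. lsum m nk (Cof p l) (Bb j) = - ((if l = j then 1 else 0) *
        (L l / lam p l ^ s + Mm l * (of_nat s * lam p l ^ (s - Suc 0) * mu p l) / (lam p l ^ s * lam p l ^ s))))
     \<and> (\<forall>k i. ((\<lambda>t. Hbar s n m nk \<alpha> \<phi> ((lam MP)(j := lam MP j + t), mu MP, cc MP) k i) has_real_derivative Bb j k i) (at 0))" ..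
  define dv where "dv j = dmu (\<lambda>q. H n m nk \<alpha> \<phi> q k0 i0) p j" for j
  define dw where "dw j = dlam (\<lambda>q. H n m nk \<alpha> \<phi> q k0 i0) p j" for j
  have dvA: "dv j = A j k0 i0" if j: "j \<in> {1..n}" for j
    unfolding dv_def dmu_def using A j by (auto intro!: DERIV_imp_deriv)
  have dwB: "dw j = B j k0 i0" if j: "j \<in> {1..n}" for j
    unfolding dw_def dlam_def using B j by (auto intro!: DERIV_imp_deriv)
  have dv0: "dv j = 0" if j: "j \<notin> {1..n}" for j
  proof -
    have "\<And>t. H n m nk \<alpha> \<phi> (lam p, (mu p)(j := mu p j + t), cc p) = Hp"
      unfolding Hp_def by (rule H_rows) (use j in auto)
    then show ?thesis unfolding dv_def dmu_def by (simp add: DERIV_imp_deriv[OF DERIV_const])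
  qed
  have dw0: "dw j = 0" if j: "j \<notin> {1..n}" for j
  proof -
    have "\<And>t. H n m nk \<alpha> \<phi> ((lam p)(j := lam p j + t), mu p, cc p) = Hp"
      unfolding Hp_def by (rule H_rows) (use j in auto)
    then show ?thesis unfolding dw_def dlam_def by (simp add: DERIV_imp_deriv[OF DERIV_const])
  qed
  have dmub: "dmu (\<lambda>q. Hbar s n m nk \<alpha> \<phi> q k0 i0) MP j = Ab j k0 i0" if j: "j \<in> {1..n}" for j
    unfolding dmu_def using Ab j by (auto intro!: DERIV_imp_deriv)
  have dlamb: "dlam (\<lambda>q. Hbar s n m nk \<alpha> \<phi> q k0 i0) MP j = Bb j k0 i0" if j: "j \<in> {1..n}" for j
    unfolding dlam_def using Bb j by (auto intro!: DERIV_imp_deriv)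
  have AbA: "Ab j k0 i0 = A j k0 i0" if j: "j \<in> {1..n}" for j
  proof -
    have "Ab j k0 i0 = 1 * A j k0 i0 + 0 * A j k0 i0"
      by (rule lin_comb_unique[OF inj]) (use A Ab j in auto)
    thus ?thesis by simp
  qed
  have BbB: "Bb j k0 i0 = (1 / lam p j ^ s) * B j k0 i0 + (of_nat s * lam p j ^ (s - Suc 0) * mu p j / (lam p j ^ s * lam p j ^ s)) * A j k0 i0"
    if j: "j \<in> {1..n}" for j
  proof (rule lin_comb_unique[OF inj])
    show "supp_ok m nk (Bb j)" "supp_ok m nk (B j)" "supp_ok m nk (A j)" using A B Bb j by auto
    show "\<forall>l\<in>{1..n}. lsum m nk (Cof p l) (Bb j) = 1 / lam p j ^ s * lsum m nk (Cof p l) (B j) +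
       of_nat s * lam p j ^ (s - Suc 0) * mu p j / (lam p j ^ s * lam p j ^ s) * lsum m nk (Cof p l) (A j)"
    proof
      fix l assume l: "l \<in> {1..n}"
      show "lsum m nk (Cof p l) (Bb j) = 1 / lam p j ^ s * lsum m nk (Cof p l) (B j) +
       of_nat s * lam p j ^ (s - Suc 0) * mu p j / (lam p j ^ s * lam p j ^ s) * lsum m nk (Cof p l) (A j)"
      proof -
        have e1: "lsum m nk (Cof p l) (Bb j) = - ((if l = j then 1 else 0) *
          (L l / lam p l ^ s + Mm l * (of_nat s * lam p l ^ (s - Suc 0) * mu p l) / (lam p l ^ s * lam p l ^ s)))"
          using Bb j l by blast
        have e2: "lsum m nk (Cof p l) (B j) = - (L l * (if l = j then 1 else 0))" using B j l by blast
        have e3: "lsum m nk (Cof p l) (A j) = - (Mm l * (if l = j then 1 else 0))" using A j l by blast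
        show ?thesis unfolding e1 e2 e3 by (cases "l = j") (simp_all add: algebra_simps)
      qed
    qed
  qed
  have comm: "L l * A l k i - Mm l * B l k i = 0" if l: "l \<in> {1..n}" for l k i
  proof -
    have "(\<lambda>_ _. 0::real) k i = L l * A l k i + (- Mm l) * B l k i"
    proof (rule lin_comb_unique[OF inj])
      show "supp_ok m nk (\<lambda>_ _. 0)" "supp_ok m nk (A l)" "supp_ok m nk (B l)" using A B l by (auto simp: supp_ok_def)
      show "\<forall>j\<in>{1..n}. lsum m nk (Cof p j) (\<lambda>_ _. 0) = L l * lsum m nk (Cof p j) (A l) + - Mm l * lsum m nk (Cof p j) (B l)"
        using A B l by (auto simp: lsum_zero)
    qed
    thus ?thesis by simp
  qed
  define v where "v = ham_vf (\<lambda>q. H n m nk \<alpha> \<phi> q k0 i0) p"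
  define \<gamma> where "\<gamma> t = shift p t v" for t
  have glam: "lam (\<gamma> t) j = lam p j + t * dv j" for t j
    by (simp add: \<gamma>_def shift_def v_def ham_vf_def dv_def)
  have gmu: "mu (\<gamma> t) j = mu p j + t * (- dw j)" for t j
    by (simp add: \<gamma>_def shift_def v_def ham_vf_def dw_def)
  have gcc: "cc (\<gamma> t) = cc p" for t
    by (simp add: \<gamma>_def shift_def v_def ham_vf_def)
  have g0: "\<gamma> 0 = p"
  proof -
    have "lam (\<gamma> 0) = lam p" "mu (\<gamma> 0) = mu p" "cc (\<gamma> 0) = cc p" using glam gmu gcc by auto
    then show ?thesis by (metis tup_simps(4))
  qed
  have ev: "eventually (\<lambda>t. \<gamma> t \<in> \<M>) (nhds 0)"
    by (rule EM[OF p]) (auto simp: glam gmu gcc dv0 dw0 intro!: continuous_intros)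
  have "\<exists>x'. supp_ok m nk x' \<and> (\<forall>l\<in>{1..n}. lsum m nk (Cof (\<gamma> 0) l) x' =
      - (ErowL (\<gamma> 0) l (H n m nk \<alpha> \<phi> (\<gamma> 0)) * dv l + ErowM (\<gamma> 0) l (H n m nk \<alpha> \<phi> (\<gamma> 0)) * (- dw l)))
     \<and> (\<forall>k i. ((\<lambda>t. H n m nk \<alpha> \<phi> (\<gamma> t) k i) has_real_derivative x' k i) (at 0))"
    by (rule old_GL[OF ev]) (auto simp: glam gmu gcc intro!: derivative_eq_intros)
  then obtain x' where x': "supp_ok m nk x'" "\<forall>l\<in>{1..n}. lsum m nk (Cof p l) x' = - (L l * dv l + Mm l * (- dw l))"
    "\<forall>k i. ((\<lambda>t. H n m nk \<alpha> \<phi> (\<gamma> t) k i) has_real_derivative x' k i) (at 0)"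
    unfolding g0 L_def Mm_def Hp_def by blast
  have x'0: "x' k i = 0" for k i
  proof -
    have "x' k i = 0 * x' k i + 0 * x' k i"
    proof (rule lin_comb_unique[OF inj x'(1) x'(1) x'(1)])
      show "\<forall>l\<in>{1..n}. lsum m nk (Cof p l) x' = 0 * lsum m nk (Cof p l) x' + 0 * lsum m nk (Cof p l) x'"
        using x'(2) comm dvA dwB by simp
    qed
    thus ?thesis by simp
  qed
  have dH: "((\<lambda>t. H n m nk \<alpha> \<phi> (\<gamma> t) k i) has_real_derivative 0) (at 0)" for k i
    using x'(3) x'0 by metis
  define w where "w = ham_vf (\<lambda>q. Hbar s n m nk \<alpha> \<phi> q k0 i0) MP"
  have P1: "((\<lambda>t. lam (Miura s n m nk \<alpha> \<phi> (\<gamma> t)) j) has_real_derivative lam w j) (at 0)"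
    and P2: "((\<lambda>t. mu (Miura s n m nk \<alpha> \<phi> (\<gamma> t)) j) has_real_derivative mu w j) (at 0)"
    if j: "j \<in> {1..n}" for j
  proof -
    have lw: "lam w j = dv j" using dmub[OF j] AbA[OF j] dvA[OF j] by (simp add: w_def ham_vf_def)
    show "((\<lambda>t. lam (Miura s n m nk \<alpha> \<phi> (\<gamma> t)) j) has_real_derivative lam w j) (at 0)"
      unfolding Miura_simps glam lw by (auto intro!: derivative_eq_intros)
    have nz: "lam p j \<noteq> 0" using lnz p j by blast
    have mw: "mu w j = - ((1 / lam p j ^ s) * dw j + (of_nat s * lam p j ^ (s - Suc 0) * mu p j / (lam p j ^ s * lam p j ^ s)) * dv j)"
      using dlamb[OF j] BbB[OF j] dvA[OF j] dwB[OF j] by (simp add: w_def ham_vf_def)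
    have dn: "((\<lambda>t. mu p j + t * (- dw j)) has_real_derivative - dw j) (at 0)"
      by (auto intro!: derivative_eq_intros)
    have dd: "((\<lambda>t. lam p j + t * dv j) has_real_derivative dv j) (at 0)"
      by (auto intro!: derivative_eq_intros)
    have "((\<lambda>t. (mu p j + t * (- dw j)) / (lam p j + t * dv j) ^ s) has_real_derivative
       ((- dw j) * (lam p j + 0 * dv j) ^ s - (mu p j + 0 * (- dw j)) * (of_nat s * (dv j * (lam p j + 0 * dv j) ^ (s - Suc 0))))
         / ((lam p j + 0 * dv j) ^ s * (lam p j + 0 * dv j) ^ s)) (at 0)"
      by (rule DERIV_divide[OF dn DERIV_power[OF dd]]) (use nz in simp)
    moreover have "((- dw j) * (lam p j + 0 * dv j) ^ s - (mu p j + 0 * (- dw j)) * (of_nat s * (dv j * (lam p j + 0 * dv j) ^ (s - Suc 0))))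
         / ((lam p j + 0 * dv j) ^ s * (lam p j + 0 * dv j) ^ s) = mu w j"
      unfolding mw using nz by (simp add: field_simps)
    ultimately show "((\<lambda>t. mu (Miura s n m nk \<alpha> \<phi> (\<gamma> t)) j) has_real_derivative mu w j) (at 0)"
      unfolding Miura_simps glam gmu by simp
  qed
  have P3: "((\<lambda>t. cc (Miura s n m nk \<alpha> \<phi> (\<gamma> t)) k' r) has_real_derivative cc w k' r) (at 0)" for k' r
  proof -
    have cw: "cc w k' r = 0" by (simp add: w_def ham_vf_def)
    show ?thesis
    proof (cases "1 \<le> r \<and> r \<le> s")
      case True
      then show ?thesis unfolding Miura_simps cw using dH by simp
    next
      case False
      have "(\<lambda>t. cc (Miura s n m nk \<alpha> \<phi> (\<gamma> t)) k' r) = (\<lambda>t. cc p k' r)"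
        unfolding Miura_simps gcc using False by (intro ext) (simp only: if_False)
      then show ?thesis unfolding cw by simp
    qed
  qed
  show ?thesis
    unfolding Let_def v_def[symmetric] w_def[symmetric, unfolded MP_def] \<gamma>_def[symmetric]
    using P1 P2 P3 by blast
qed

end

theorem theorem12:
  fixes n m \<alpha> s :: nat and nk :: "nat \<Rightarrow> nat"
    and \<phi> :: "nat \<Rightarrow> real \<times> real \<Rightarrow> real" and \<M> :: "pt set"
  assumes "n \<ge> 1" and "m \<ge> 1"
    and "\<forall>k\<in>{1..m}. nk k \<ge> 1"
    and "(\<Sum>k=1..m. nk k) = n"
    and "1 \<le> \<alpha>" and "\<forall>k\<in>{1..m}. \<alpha> \<le> nk k"
    and "\<forall>k\<in>{0..m}. smooth2 (\<phi> k)"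
    and "\<phi> m = (\<lambda>_. 1)"
    and "open_pts n m nk \<alpha> \<M>"
    and "\<forall>p\<in>\<M>. nondeg n m nk \<phi> p"
    and "\<forall>p\<in>\<M>. \<exists>a. supp_ok m nk a \<and> sep_rel n m nk \<alpha> \<phi> p a"
    and "s \<in> {1..\<alpha>}"
    and "\<forall>p\<in>\<M>. \<forall>j\<in>{1..n}. lam p j \<noteq> 0"
    and "inj_on (Miura s n m nk \<alpha> \<phi>) \<M>"
  shows "\<forall>p\<in>\<M>. \<forall>k\<in>{1..m}. \<forall>i\<in>{1..nk k}.
    (let v = ham_vf (\<lambda>q. H n m nk \<alpha> \<phi> q k i) p;
         w = ham_vf (\<lambda>q. Hbar s n m nk \<alpha> \<phi> q k i) (Miura s n m nk \<alpha> \<phi> p);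
         F = (\<lambda>t. Miura s n m nk \<alpha> \<phi> (shift p t v))
     in (\<forall>j\<in>{1..n}. ((\<lambda>t. lam (F t) j) has_real_derivative lam w j) (at 0)
                  \<and> ((\<lambda>t. mu (F t) j) has_real_derivative mu w j) (at 0))
      \<and> (\<forall>k'\<in>{1..m}. \<forall>r\<in>{1..\<alpha>}. ((\<lambda>t. cc (F t) k' r) has_real_derivative cc w k' r) (at 0)))"
  proof -
  interpret S12 n m \<alpha> s nk \<phi> \<M>
    by unfold_locales (use assms in auto)
  show ?thesis using main_p by blast
qed

end
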